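(* For every $\lambda\in\mathcal{P}^+$, $$D_\pi\,m_\lambda=t^{\langle\pi,\rho\rangle}\sum_{\nu\in W(\lambda)}\Big(\sum_{\tau\in W(\pi)}t^{\langle\tau,\rho\rangle}q^{\langle\tau,\nu\rangle}\Big)\chi_\nu .$$
   Context: $E$ real Euclidean space spanned by an irreducible reduced root system $R$ with Weyl group $W$, positive roots $R^+$; $\mathcal{P}$ weight lattice, $\mathcal{P}^+$ dominant weights; $W(\mu)$ denotes a $W$-orbit and $W_\mu$ a stabilizer. $\pi\in E$ is a minuscule weight of the dual root system, i.e. $\langle\pi,\alpha\rangle\in\{0,1\}$ for all $\alpha\in R^+$ (assumed to exist). $q,t$ are indeterminates (powers with real exponents understood formally, or $q,t>0$ real). Formal exponentials $e^\lambda$ with $e^\lambda e^\mu=e^{\lambda+\mu}$; $m_\lambda=\sum_{\mu\in W(\lambda)}e^\mu$. For $x\in E$, $T_{x,q}e^\lambda=q^{\langle\lambda,x\rangle}e^\lambda$. The Macdonald operator is $D_\pi=\frac{1}{|W_\pi|}\sum_{w\in W}\Big(\prod_{\alpha\in R^+}\frac{1-t^{\langle\pi,\alpha\rangle}e^{w(\alpha)}}{1-e^{w(\alpha)}}\Big)T_{w(\pi),q}$. $\rho=\frac12\sum_{\alpha\in R^+}\alpha$, $\delta=\prod_{\alpha\in R^+}(e^{\alpha/2}-e^{-\alpha/2})$, and for any $\nu\in\mathcal{P}$ the Weyl character is $\chi_\nu=\delta^{-1}\sum_{w\in W}\det(w)e^{w(\nu+\rho)}$. *)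

theory Defs
  imports "HOL-Analysis.Analysis"
begin

definition refl_root :: "real^'n \<Rightarrow> real^'n \<Rightarrow> real^'n" where
  "refl_root a x = x - (2 * (x \<bullet> a) / (a \<bullet> a)) *\<^sub>R a"

definition root_system :: "(real^'n) set \<Rightarrow> bool" where
  "root_system R \<longleftrightarrow> finite R \<and> 0 \<notin> R \<and> span R = UNIV \<and>
     (\<forall>a\<in>R. \<forall>b\<in>R. refl_root a b \<in> R) \<and>
     (\<forall>a\<in>R. \<forall>b\<in>R. 2 * (b \<bullet> a) / (a \<bullet> a) \<in> \<int>)"

definition reduced_rs :: "(real^'n) set \<Rightarrow> bool" where
  "reduced_rs R \<longleftrightarrow> (\<forall>a\<in>R. \<forall>c::real. c *\<^sub>R a \<in> R \<longrightarrow> c = 1 \<or> c = -1)"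

definition irreducible_rs :: "(real^'n) set \<Rightarrow> bool" where
  "irreducible_rs R \<longleftrightarrow> \<not> (\<exists>A B. A \<union> B = R \<and> A \<inter> B = {} \<and> A \<noteq> {} \<and> B \<noteq> {} \<and>
      (\<forall>a\<in>A. \<forall>b\<in>B. a \<bullet> b = 0))"

definition positive_system :: "(real^'n) set \<Rightarrow> (real^'n) set \<Rightarrow> bool" where
  "positive_system R Rp \<longleftrightarrow> (\<exists>g. (\<forall>a\<in>R. a \<bullet> g \<noteq> 0) \<and> Rp = {a\<in>R. a \<bullet> g > 0})"

inductive_set weyl_group :: "(real^'n) set \<Rightarrow> (real^'n \<Rightarrow> real^'n) set" for R where
  weyl_id: "id \<in> weyl_group R"
| weyl_step: "w \<in> weyl_group R \<Longrightarrow> a \<in> R \<Longrightarrow> refl_root a \<circ> w \<in> weyl_group R"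

definition weight_lattice :: "(real^'n) set \<Rightarrow> (real^'n) set" where
  "weight_lattice R = {l. \<forall>a\<in>R. 2 * (l \<bullet> a) / (a \<bullet> a) \<in> \<int>}"

definition dominant_weights :: "(real^'n) set \<Rightarrow> (real^'n) set \<Rightarrow> (real^'n) set" where
  "dominant_weights R Rp = {l \<in> weight_lattice R. \<forall>a\<in>Rp. l \<bullet> a \<ge> 0}"

definition dual_minuscule :: "(real^'n) set \<Rightarrow> real^'n \<Rightarrow> bool" where
  "dual_minuscule Rp p \<longleftrightarrow> (\<forall>a\<in>Rp. p \<bullet> a = 0 \<or> p \<bullet> a = 1)"

definition worbit :: "(real^'n) set \<Rightarrow> real^'n \<Rightarrow> (real^'n) set" where
  "worbit R m = (\<lambda>w. w m) ` weyl_group R"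

definition wstab :: "(real^'n) set \<Rightarrow> real^'n \<Rightarrow> (real^'n \<Rightarrow> real^'n) set" where
  "wstab R m = {w \<in> weyl_group R. w m = m}"

definition rho :: "(real^'n) set \<Rightarrow> real^'n" where
  "rho Rp = (1/2) *\<^sub>R (\<Sum>a\<in>Rp. a)"

text \<open>Formal exponentials are realised as functions on E: e^l is y \<mapsto> exp (l \<bullet> y).
  Thus T_{x,q} becomes translation by (ln q) x; rational expressions are evaluated
  at regular points y.\<close>

definition sym_monomial :: "(real^'n) set \<Rightarrow> real^'n \<Rightarrow> real^'n \<Rightarrow> real" where
  "sym_monomial R l y = (\<Sum>m\<in>worbit R l. exp (m \<bullet> y))"

definition weyl_delta :: "(real^'n) set \<Rightarrow> real^'n \<Rightarrow> real" where
  "weyl_delta Rp y = (\<Prod>a\<in>Rp. exp ((a \<bullet> y) / 2) - exp (- (a \<bullet> y) / 2))"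

definition weyl_char :: "(real^'n) set \<Rightarrow> (real^'n) set \<Rightarrow> real^'n \<Rightarrow> real^'n \<Rightarrow> real" where
  "weyl_char R Rp v y =
     (\<Sum>w\<in>weyl_group R. det (matrix w) * exp (w (v + rho Rp) \<bullet> y)) / weyl_delta Rp y"

definition macdonald_op ::
  "(real^'n) set \<Rightarrow> (real^'n) set \<Rightarrow> real^'n \<Rightarrow> real \<Rightarrow> real \<Rightarrow> (real^'n \<Rightarrow> real) \<Rightarrow> real^'n \<Rightarrow> real" where
  "macdonald_op R Rp p q t f y =
     (1 / real (card (wstab R p))) *
     (\<Sum>w\<in>weyl_group R.
        (\<Prod>a\<in>Rp. (1 - t powr (p \<bullet> a) * exp (w a \<bullet> y)) / (1 - exp (w a \<bullet> y)))
        * f (y + ln q *\<^sub>R w p))"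

end

theory Submission
  imports Defs "HOL-Real_Asymp.Real_Asymp"
begin

lemma refl_linear: "linear (refl_root a)"
  unfolding refl_root_def
  by (rule linearI) (auto simp: inner_add_left algebra_simps scaleR_add_left add_divide_distrib)

lemma refl_refl: "a \<noteq> 0 \<Longrightarrow> refl_root a (refl_root a x) = x"
  unfolding refl_root_def
  by (simp add: inner_diff_left algebra_simps)

lemma refl_inner: "a \<noteq> 0 \<Longrightarrow> refl_root a x \<bullet> refl_root a z = x \<bullet> z"
  unfolding refl_root_def
  by (simp add: inner_diff_left inner_diff_right algebra_simps inner_commute)

lemma refl_self: "a \<noteq> 0 \<Longrightarrow> refl_root a a = - a"
  unfolding refl_root_def by (simp add: vec_eq_iff)

lemma refl_neg: "refl_root (- a) = refl_root a"
  unfolding refl_root_def by auto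

locale rsys =
  fixes R Rp :: "(real^'n) set" and g :: "real^'n"
  assumes rs: "root_system R" and red: "reduced_rs R"
    and greg: "\<forall>a\<in>R. a \<bullet> g \<noteq> 0" and Rp_eq: "Rp = {a\<in>R. a \<bullet> g > 0}"
begin

abbreviation "W \<equiv> weyl_group R"

lemma finR: "finite R" using rs by (simp add: root_system_def)
lemma zeroR: "0 \<notin> R" using rs by (simp add: root_system_def)
lemma nz: "a \<in> R \<Longrightarrow> a \<noteq> 0" using zeroR by auto
lemma spanR: "span R = UNIV" using rs by (simp add: root_system_def)
lemma reflR: "a \<in> R \<Longrightarrow> b \<in> R \<Longrightarrow> refl_root a b \<in> R"
  using rs by (simp add: root_system_def)
lemma integR: "a \<in> R \<Longrightarrow> b \<in> R \<Longrightarrow> 2 * (b \<bullet> a) / (a \<bullet> a) \<in> \<int>"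
  using rs by (simp add: root_system_def)
lemma negR: "a \<in> R \<Longrightarrow> - a \<in> R"
  using reflR[of a a] refl_self[of a] nz by auto
lemma parR: "a \<in> R \<Longrightarrow> c *\<^sub>R a \<in> R \<Longrightarrow> c = 1 \<or> c = -1"
  using red by (simp add: reduced_rs_def)

lemma W_linear: "w \<in> W \<Longrightarrow> linear w"
proof (induction rule: weyl_group.induct)
  case weyl_id show ?case by (rule linear_id)
next
  case (weyl_step w a) show ?case by (rule linear_compose[OF weyl_step.IH refl_linear])
qed

lemma W_inner: "w \<in> W \<Longrightarrow> w x \<bullet> w z = x \<bullet> z"
  by (induction arbitrary: x z rule: weyl_group.induct) (auto simp: refl_inner nz)

lemma W_R: "w \<in> W \<Longrightarrow> a \<in> R \<Longrightarrow> w a \<in> R"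
  by (induction arbitrary: a rule: weyl_group.induct) (auto simp: reflR)

lemma W_comp: "w1 \<in> W \<Longrightarrow> w2 \<in> W \<Longrightarrow> w1 \<circ> w2 \<in> W"
  by (induction rule: weyl_group.induct) (auto simp: comp_assoc intro: weyl_group.intros)

lemma W_refl: "a \<in> R \<Longrightarrow> refl_root a \<in> W"
  using weyl_group.weyl_step[OF weyl_group.weyl_id, of a R] by (metis comp_id)

lemma W_id: "id \<in> W" by (rule weyl_group.weyl_id)

lemma W_inv_ex: "w \<in> W \<Longrightarrow> \<exists>w'\<in>W. w' \<circ> w = id \<and> w \<circ> w' = id"
proof (induction rule: weyl_group.induct)
  case weyl_id
  then show ?case using W_id by (metis comp_id)
next
  case (weyl_step w a)
  then obtain w' where w': "w' \<in> W" "w' \<circ> w = id" "w \<circ> w' = id" by blast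
  have ss: "refl_root a \<circ> refl_root a = id" using weyl_step nz by (auto simp: refl_refl)
  show ?case
  proof (intro bexI conjI)
    show "w' \<circ> refl_root a \<in> W" using W_comp[OF w'(1) W_refl[OF weyl_step(2)]] .
    show "w' \<circ> refl_root a \<circ> (refl_root a \<circ> w) = id"
      using ss w' by (metis comp_assoc comp_id)
    show "refl_root a \<circ> w \<circ> (w' \<circ> refl_root a) = id"
      using ss w' by (metis comp_assoc comp_id)
  qed
qed

definition winv :: "(real^'n \<Rightarrow> real^'n) \<Rightarrow> (real^'n \<Rightarrow> real^'n)" where
  "winv w = (SOME w'. w' \<in> W \<and> w' \<circ> w = id \<and> w \<circ> w' = id)"

lemma winv: assumes "w \<in> W" shows "winv w \<in> W" "winv w \<circ> w = id" "w \<circ> winv w = id"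
  using someI_ex[OF W_inv_ex[OF assms, unfolded Bex_def]] unfolding winv_def by auto

lemma winv_app: "w \<in> W \<Longrightarrow> winv w (w x) = x" "w \<in> W \<Longrightarrow> w (winv w x) = x"
  using winv[of w] by (auto simp: fun_eq_iff)

lemma W_inj: "w \<in> W \<Longrightarrow> inj w"
  by (metis injI winv_app(1))

lemma W_bij_R: "w \<in> W \<Longrightarrow> bij_betw w R R"
proof -
  assume w: "w \<in> W"
  have "w ` R \<subseteq> R" using W_R w by auto
  moreover have "R \<subseteq> w ` R"
  proof
    fix a assume "a \<in> R"
    then have "winv w a \<in> R" using W_R winv w by auto
    then show "a \<in> w ` R" using winv_app(2)[OF w] by (metis imageI)
  qed
  ultimately show ?thesis using W_inj[OF w] by (auto simp: bij_betw_def inj_on_def inj_def)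
qed

lemma finite_W: "finite W"
proof -
  have "inj_on (\<lambda>w. restrict w R) W"
  proof (rule inj_onI)
    fix w1 w2 assume w: "w1 \<in> W" "w2 \<in> W" and eq: "restrict w1 R = restrict w2 R"
    show "w1 = w2"
    proof
      fix x
      have "x \<in> span R" using spanR by auto
      moreover have "\<And>b. b \<in> R \<Longrightarrow> w1 b = w2 b" using eq by (metis restrict_apply')
      ultimately show "w1 x = w2 x"
        using linear_eq_on_span[OF W_linear[OF w(1)] W_linear[OF w(2)]] by blast
    qed
  qed
  moreover have "(\<lambda>w. restrict w R) ` W \<subseteq> (\<Pi>\<^sub>E a\<in>R. R)"
    using W_R by auto
  moreover have "finite (\<Pi>\<^sub>E a\<in>R. R)" using finR by (simp add: finite_PiE)
  ultimately show ?thesis using finite_imageD finite_subset by metis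
qed

lemma W_conj: "w \<in> W \<Longrightarrow> w (refl_root a x) = refl_root (w a) (w x)"
proof -
  assume w: "w \<in> W"
  have "w (refl_root a x) = w x - (2 * (x \<bullet> a) / (a \<bullet> a)) *\<^sub>R w a"
    unfolding refl_root_def using W_linear[OF w] by (simp add: linear_diff linear_scale)
  then show ?thesis unfolding refl_root_def using W_inner[OF w] by simp
qed

lemma W_inv_bij: "bij_betw winv W W"
proof -
  have "winv (winv w) = w" if "w \<in> W" for w
  proof -
    have "winv (winv w) = winv (winv w) \<circ> (winv w \<circ> w)" using winv[OF that] by simp
    also have "\<dots> = w" using winv[OF winv(1)[OF that]] by (metis comp_assoc id_comp)
    finally show ?thesis .
  qed
  then show ?thesis
    by (intro bij_betw_byWitness[where f'=winv]) (auto simp: winv)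
qed

lemma W_lmult_bij: "w \<in> W \<Longrightarrow> bij_betw (\<lambda>u. w \<circ> u) W W"
  by (intro bij_betw_byWitness[where f'="\<lambda>u. winv w \<circ> u"])
     (auto simp: winv W_comp comp_assoc[symmetric])

lemma W_rmult_bij: "w \<in> W \<Longrightarrow> bij_betw (\<lambda>u. u \<circ> w) W W"
  by (intro bij_betw_byWitness[where f'="\<lambda>u. u \<circ> winv w"])
     (auto simp: winv W_comp comp_assoc)

end

context rsys begin

lemma Rp_R: "Rp \<subseteq> R" using Rp_eq by auto
lemma finRp: "finite Rp" using finR Rp_R finite_subset by auto
lemma Rp_g: "a \<in> Rp \<Longrightarrow> a \<bullet> g > 0" using Rp_eq by auto
lemma Rp_I: "a \<in> R \<Longrightarrow> a \<bullet> g > 0 \<Longrightarrow> a \<in> Rp" using Rp_eq by auto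
lemma pos_or_neg: "a \<in> R \<Longrightarrow> a \<in> Rp \<or> - a \<in> Rp"
  using greg negR Rp_eq by (cases "a \<bullet> g > 0") (auto simp: not_less order_le_less)
lemma not_both: "a \<in> Rp \<Longrightarrow> - a \<notin> Rp"
  using Rp_eq by auto

definition simple :: "(real^'n) set" where
  "simple = {a\<in>Rp. \<not> (\<exists>b\<in>Rp. \<exists>c\<in>Rp. a = b + c)}"

lemma simple_Rp: "simple \<subseteq> Rp" unfolding simple_def by auto
lemma fin_simple: "finite simple" using finRp simple_Rp finite_subset by auto

lemma cone_aux: "\<forall>\<beta>\<in>Rp. card {\<gamma>\<in>Rp. \<gamma> \<bullet> g < \<beta> \<bullet> g} = n \<longrightarrow>
   (\<exists>c. (\<forall>a\<in>simple. 0 \<le> c a) \<and> \<beta> = (\<Sum>a\<in>simple. c a *\<^sub>R a))"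
proof (induction n rule: less_induct)
  case (less n)
  show ?case
  proof (intro ballI impI)
    fix \<beta> assume b: "\<beta> \<in> Rp" and n: "card {\<gamma>\<in>Rp. \<gamma> \<bullet> g < \<beta> \<bullet> g} = n"
    show "\<exists>c. (\<forall>a\<in>simple. 0 \<le> c a) \<and> \<beta> = (\<Sum>a\<in>simple. c a *\<^sub>R a)"
    proof (cases "\<beta> \<in> simple")
      case True
      have "(\<Sum>a\<in>simple. (if a = \<beta> then 1 else 0) *\<^sub>R a) = \<beta>"
      proof -
        have "(\<Sum>a\<in>simple. (if a = \<beta> then 1 else 0) *\<^sub>R a) = (\<Sum>a\<in>simple. if a = \<beta> then \<beta> else 0)"
          by (rule sum.cong) auto
        then show ?thesis using True fin_simple by simp
      qed
      then show ?thesis by (intro exI[of _ "\<lambda>a. if a = \<beta> then 1 else 0"]) auto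
    next
      case False
      then obtain b1 b2 where bb: "b1 \<in> Rp" "b2 \<in> Rp" "\<beta> = b1 + b2"
        using b unfolding simple_def by auto
      have IH: "\<exists>c. (\<forall>a\<in>simple. 0 \<le> c a) \<and> b' = (\<Sum>a\<in>simple. c a *\<^sub>R a)"
        if "b' \<in> Rp" "b' \<bullet> g < \<beta> \<bullet> g" for b'
      proof -
        have "{\<gamma>\<in>Rp. \<gamma> \<bullet> g < b' \<bullet> g} \<subset> {\<gamma>\<in>Rp. \<gamma> \<bullet> g < \<beta> \<bullet> g}"
          using that by auto
        then have "card {\<gamma>\<in>Rp. \<gamma> \<bullet> g < b' \<bullet> g} < n"
          using n finRp by (metis (no_types, lifting) mem_Collect_eq psubset_card_mono rev_finite_subset subsetI)
        then show ?thesis using less that by blast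
      qed
      obtain c1 where c1: "\<forall>a\<in>simple. 0 \<le> c1 a" "b1 = (\<Sum>a\<in>simple. c1 a *\<^sub>R a)"
        using IH[of b1] bb Rp_g[of b2] by (auto simp: inner_add_left)
      obtain c2 where c2: "\<forall>a\<in>simple. 0 \<le> c2 a" "b2 = (\<Sum>a\<in>simple. c2 a *\<^sub>R a)"
        using IH[of b2] bb Rp_g[of b1] by (auto simp: inner_add_left)
      show ?thesis
        by (intro exI[of _ "\<lambda>a. c1 a + c2 a"])
           (use c1 c2 bb in \<open>auto simp: scaleR_add_left sum.distrib\<close>)
    qed
  qed
qed

lemma cone: "\<beta> \<in> Rp \<Longrightarrow> \<exists>c. (\<forall>a\<in>simple. 0 \<le> c a) \<and> \<beta> = (\<Sum>a\<in>simple. c a *\<^sub>R a)"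
  using cone_aux by blast

lemma root_diff:
  assumes a: "a \<in> R" and b: "b \<in> R" and ab: "a \<bullet> b > 0" and ne: "a \<noteq> b"
  shows "a - b \<in> R"
proof -
  have aa: "a \<bullet> a > 0" and bb: "b \<bullet> b > 0" using nz a b by auto
  have lt: "(a \<bullet> b)^2 < (a \<bullet> a) * (b \<bullet> b)"
  proof (rule ccontr)
    assume "\<not> ?thesis"
    then have ge: "(a \<bullet> b)^2 \<ge> (a \<bullet> a) * (b \<bullet> b)" by simp
    define k where "k = (a \<bullet> b) / (a \<bullet> a)"
    have "(b - k *\<^sub>R a) \<bullet> (b - k *\<^sub>R a) = b \<bullet> b - (a \<bullet> b)^2 / (a \<bullet> a)"
      using aa unfolding k_def
      by (simp add: inner_diff_left inner_diff_right inner_commute power2_eq_square field_simps)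
    also have "\<dots> \<le> 0" using ge aa by (simp add: field_simps)
    finally have "b = k *\<^sub>R a" by (metis eq_iff_diff_eq_0 inner_ge_zero inner_eq_zero_iff order_antisym)
    then have "k = 1 \<or> k = -1" using parR a b by auto
    then show False
    proof
      assume "k = 1" then show False using \<open>b = k *\<^sub>R a\<close> ne by simp
    next
      assume "k = -1" then show False using \<open>b = k *\<^sub>R a\<close> ab aa by simp
    qed
  qed
  obtain i1 :: int where i1: "2 * (a \<bullet> b) / (b \<bullet> b) = of_int i1"
    using integR[OF b a] by (auto elim: Ints_cases)
  obtain i2 :: int where i2: "2 * (a \<bullet> b) / (a \<bullet> a) = of_int i2"
    using integR[OF a b] by (auto simp: inner_commute elim: Ints_cases)
  have p1: "i1 > 0" using i1 ab bb by (metis divide_pos_pos mult_pos_pos of_int_0_less_iff zero_less_numeral)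
  have p2: "i2 > 0" using i2 ab aa by (metis divide_pos_pos mult_pos_pos of_int_0_less_iff zero_less_numeral)
  have "of_int (i1 * i2) = 4 * (a \<bullet> b)^2 / ((a \<bullet> a) * (b \<bullet> b))"
    using i1 i2 aa bb by (simp add: field_simps power2_eq_square flip: i1 i2)
  also have "\<dots> < 4" using lt aa bb by (simp add: field_simps)
  finally have "i1 * i2 < 4" by linarith
  then have "i1 = 1 \<or> i2 = 1"
  proof -
    have "i1 \<ge> 2 \<Longrightarrow> i2 \<ge> 2 \<Longrightarrow> i1 * i2 \<ge> 4"
      using mult_mono[of 2 i1 2 i2] by auto
    then show ?thesis using p1 p2 \<open>i1 * i2 < 4\<close> by linarith
  qed
  then show ?thesis
  proof
    assume "i1 = 1"
    then have "refl_root b a = a - b" using i1 ab unfolding refl_root_def by (simp add: inner_commute)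
    then show ?thesis using reflR[OF b a] by simp
  next
    assume "i2 = 1"
    then have "refl_root a b = b - a" using i2 ab unfolding refl_root_def by (simp add: inner_commute)
    then show ?thesis using reflR[OF a b] negR by fastforce
  qed
qed

lemma simple_obtuse:
  assumes a: "a \<in> simple" and b: "b \<in> simple" and ne: "a \<noteq> b"
  shows "a \<bullet> b \<le> 0"
proof (rule ccontr)
  assume "\<not> ?thesis"
  moreover have "a \<in> R" "b \<in> R" using a b simple_Rp Rp_R by auto
  ultimately have "a - b \<in> R" using root_diff[of a b] ne by auto
  then have "a - b \<in> Rp \<or> b - a \<in> Rp" using pos_or_neg by fastforce
  then show False
  proof
    assume "a - b \<in> Rp"
    then have "a = (a - b) + b" "b \<in> Rp" using b simple_Rp by auto
    then show False using a \<open>a - b \<in> Rp\<close> unfolding simple_def by blast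
  next
    assume "b - a \<in> Rp"
    then have "b = (b - a) + a" "a \<in> Rp" using a simple_Rp by auto
    then show False using b \<open>b - a \<in> Rp\<close> unfolding simple_def by blast
  qed
qed

lemma simple_refl_pos:
  assumes al: "\<alpha> \<in> simple" and b: "\<beta> \<in> Rp" and ne: "\<beta> \<noteq> \<alpha>"
  shows "refl_root \<alpha> \<beta> \<in> Rp"
proof (rule ccontr)
  assume nin: "refl_root \<alpha> \<beta> \<notin> Rp"
  have alR: "\<alpha> \<in> R" "\<alpha> \<in> Rp" using al simple_Rp Rp_R by auto
  have bR: "\<beta> \<in> R" using b Rp_R by auto
  define k where "k = 2 * (\<beta> \<bullet> \<alpha>) / (\<alpha> \<bullet> \<alpha>)"
  have sb: "refl_root \<alpha> \<beta> = \<beta> - k *\<^sub>R \<alpha>" unfolding refl_root_def k_def ..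
  have "refl_root \<alpha> \<beta> \<in> R" using reflR alR bR by auto
  then have "- refl_root \<alpha> \<beta> \<in> Rp" using nin pos_or_neg by auto
  obtain c where c: "\<forall>a\<in>simple. 0 \<le> c a" "\<beta> = (\<Sum>a\<in>simple. c a *\<^sub>R a)" using cone[OF b] by auto
  obtain d where d: "\<forall>a\<in>simple. 0 \<le> d a" "- refl_root \<alpha> \<beta> = (\<Sum>a\<in>simple. d a *\<^sub>R a)"
    using cone[OF \<open>- refl_root \<alpha> \<beta> \<in> Rp\<close>] by auto
  define e where "e a = c a + d a" for a
  have e0: "\<forall>a\<in>simple. 0 \<le> e a" using c d unfolding e_def by auto
  have "(\<Sum>a\<in>simple. e a *\<^sub>R a) = \<beta> + (- refl_root \<alpha> \<beta>)"
    unfolding e_def using c d by (simp add: scaleR_add_left sum.distrib)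
  also have "\<dots> = k *\<^sub>R \<alpha>" using sb by simp
  finally have "(\<Sum>a\<in>simple. e a *\<^sub>R a) = k *\<^sub>R \<alpha>" .
  then have "e \<alpha> *\<^sub>R \<alpha> + (\<Sum>a\<in>simple - {\<alpha>}. e a *\<^sub>R a) = k *\<^sub>R \<alpha>"
    using sum.remove[OF fin_simple al] by metis
  then have veq: "(\<Sum>a\<in>simple - {\<alpha>}. e a *\<^sub>R a) = (k - e \<alpha>) *\<^sub>R \<alpha>"
    by (simp add: algebra_simps)
  define v where "v = (\<Sum>a\<in>simple - {\<alpha>}. e a *\<^sub>R a)"
  have vg: "v \<bullet> g = (\<Sum>a\<in>simple - {\<alpha>}. e a * (a \<bullet> g))"
    unfolding v_def by (simp add: inner_sum_left)
  have vg0: "\<forall>a\<in>simple - {\<alpha>}. 0 \<le> e a * (a \<bullet> g)"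
  proof
    fix a assume a: "a \<in> simple - {\<alpha>}"
    then have "e a \<ge> 0" "a \<bullet> g > 0" using e0 Rp_g simple_Rp by auto
    then show "0 \<le> e a * (a \<bullet> g)" by simp
  qed
  have va: "v \<bullet> \<alpha> = (\<Sum>a\<in>simple - {\<alpha>}. e a * (a \<bullet> \<alpha>))"
    unfolding v_def by (simp add: inner_sum_left)
  have "v \<bullet> \<alpha> \<le> 0" unfolding va
    using e0 simple_obtuse al by (intro sum_nonpos) (auto intro!: mult_nonneg_nonpos)
  have aa: "\<alpha> \<bullet> \<alpha> > 0" using nz alR by auto
  have ag: "\<alpha> \<bullet> g > 0" using Rp_g alR by auto
  show False
  proof (cases "k - e \<alpha> > 0")
    case True
    have "v \<bullet> \<alpha> = (k - e \<alpha>) * (\<alpha> \<bullet> \<alpha>)" unfolding v_def veq by simp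
    also have "\<dots> > 0" using True aa by simp
    finally show False using \<open>v \<bullet> \<alpha> \<le> 0\<close> by simp
  next
    case False
    have "v \<bullet> g = (k - e \<alpha>) * (\<alpha> \<bullet> g)" unfolding v_def veq by simp
    also have "\<dots> \<le> 0" using False ag by (simp add: mult_nonpos_nonneg)
    finally have "v \<bullet> g \<le> 0" .
    moreover have "v \<bullet> g \<ge> 0" unfolding vg using vg0 by (intro sum_nonneg) auto
    ultimately have "(\<Sum>a\<in>simple - {\<alpha>}. e a * (a \<bullet> g)) = 0" using vg by simp
    then have "\<forall>a\<in>simple - {\<alpha>}. e a * (a \<bullet> g) = 0"
      using sum_nonneg_eq_0_iff[OF finite_Diff[OF fin_simple], of "{\<alpha>}" "\<lambda>a. e a * (a \<bullet> g)"] vg0 by auto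
    then have "\<forall>a\<in>simple - {\<alpha>}. e a = 0" using Rp_g simple_Rp by force
    then have "\<forall>a\<in>simple - {\<alpha>}. c a = 0" using c d unfolding e_def
      by (metis DiffD1 add_nonneg_eq_0_iff)
    then have "(\<Sum>a\<in>simple - {\<alpha>}. c a *\<^sub>R a) = 0" by simp
    then have "\<beta> = c \<alpha> *\<^sub>R \<alpha>" using c(2) sum.remove[OF fin_simple al, of "\<lambda>a. c a *\<^sub>R a"] by simp
    then have "c \<alpha> = 1 \<or> c \<alpha> = -1" using parR alR bR by auto
    then show False
    proof
      assume "c \<alpha> = 1" then show False using \<open>\<beta> = c \<alpha> *\<^sub>R \<alpha>\<close> ne by simp
    next
      assume "c \<alpha> = -1" then show False using \<open>\<beta> = c \<alpha> *\<^sub>R \<alpha>\<close> b alR not_both by simp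
    qed
  qed
qed

lemma simple_R: "\<alpha> \<in> simple \<Longrightarrow> \<alpha> \<in> R" using simple_Rp Rp_R by auto

lemma simple_refl_bij:
  assumes al: "\<alpha> \<in> simple"
  shows "bij_betw (refl_root \<alpha>) (Rp - {\<alpha>}) (Rp - {\<alpha>})"
proof -
  have nz': "\<alpha> \<noteq> 0" using nz simple_R al by auto
  have into: "refl_root \<alpha> \<beta> \<in> Rp - {\<alpha>}" if "\<beta> \<in> Rp - {\<alpha>}" for \<beta>
  proof -
    have "refl_root \<alpha> \<beta> \<in> Rp" using simple_refl_pos al that by auto
    moreover have "refl_root \<alpha> \<beta> \<noteq> \<alpha>"
    proof
      assume "refl_root \<alpha> \<beta> = \<alpha>"
      then have "\<beta> = - \<alpha>" using refl_refl[OF nz', of \<beta>] refl_self[OF nz'] by metis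
      then show False using that not_both al simple_Rp by auto
    qed
    ultimately show ?thesis by auto
  qed
  show ?thesis
    by (rule bij_betw_byWitness[where f'="refl_root \<alpha>"]) (use into refl_refl[OF nz'] in auto)
qed

lemma sumRp_refl:
  assumes al: "\<alpha> \<in> simple"
  shows "refl_root \<alpha> (\<Sum>Rp) = (\<Sum>Rp) - 2 *\<^sub>R \<alpha>"
proof -
  have nz': "\<alpha> \<noteq> 0" using nz simple_R al by auto
  have alp: "\<alpha> \<in> Rp" using al simple_Rp by auto
  have "refl_root \<alpha> (\<Sum>Rp) = (\<Sum>a\<in>Rp. refl_root \<alpha> a)"
    using linear_sum[OF refl_linear] by (simp add: o_def)
  also have "\<dots> = refl_root \<alpha> \<alpha> + (\<Sum>a\<in>Rp - {\<alpha>}. refl_root \<alpha> a)"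
    using sum.remove[OF finRp alp] by metis
  also have "(\<Sum>a\<in>Rp - {\<alpha>}. refl_root \<alpha> a) = (\<Sum>a\<in>Rp - {\<alpha>}. a)"
    using sum.reindex_bij_betw[OF simple_refl_bij[OF al], of "\<lambda>a. a"] by simp
  also have "(\<Sum>Rp) = \<alpha> + (\<Sum>a\<in>Rp - {\<alpha>}. a)"
    using sum.remove[OF finRp alp] by metis
  ultimately show ?thesis using refl_self[OF nz'] by (simp add: scaleR_2)
qed

lemma rho_refl: "\<alpha> \<in> simple \<Longrightarrow> refl_root \<alpha> (rho Rp) = rho Rp - \<alpha>"
proof -
  assume al: "\<alpha> \<in> simple"
  have "refl_root \<alpha> ((1/2) *\<^sub>R (\<Sum>Rp)) = (1/2) *\<^sub>R refl_root \<alpha> (\<Sum>Rp)"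
    by (rule linear_scale[OF refl_linear])
  then show ?thesis unfolding rho_def using sumRp_refl[OF al] by (simp add: scaleR_diff_right)
qed

lemma rho_simple: assumes al: "\<alpha> \<in> simple" shows "2 * (rho Rp \<bullet> \<alpha>) / (\<alpha> \<bullet> \<alpha>) = 1"
proof -
  have nz': "\<alpha> \<noteq> 0" using nz simple_R al by auto
  have "(2 * (rho Rp \<bullet> \<alpha>) / (\<alpha> \<bullet> \<alpha>)) *\<^sub>R \<alpha> = 1 *\<^sub>R \<alpha>"
    using rho_refl[OF al] unfolding refl_root_def by simp
  then show ?thesis using nz' by (metis scaleR_cancel_right)
qed

lemma rho_simple_pos: "\<alpha> \<in> simple \<Longrightarrow> rho Rp \<bullet> \<alpha> > 0"
proof -
  assume al: "\<alpha> \<in> simple"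
  have aa: "\<alpha> \<bullet> \<alpha> > 0" using nz simple_R al by auto
  have "rho Rp \<bullet> \<alpha> = (\<alpha> \<bullet> \<alpha>) / 2" using rho_simple[OF al] aa by (simp add: field_simps)
  then show ?thesis using aa by linarith
qed

lemma rho_pos: assumes b: "\<beta> \<in> Rp" shows "rho Rp \<bullet> \<beta> > 0"
proof -
  obtain c where c: "\<forall>a\<in>simple. 0 \<le> c a" "\<beta> = (\<Sum>a\<in>simple. c a *\<^sub>R a)" using cone[OF b] by auto
  have "\<exists>a\<in>simple. c a \<noteq> 0"
  proof (rule ccontr)
    assume "\<not> ?thesis"
    then have "\<beta> = 0" using c by simp
    then show False using b Rp_R nz by auto
  qed
  then obtain a0 where a0: "a0 \<in> simple" "c a0 > 0" using c by force
  have "rho Rp \<bullet> \<beta> = (\<Sum>a\<in>simple. c a * (rho Rp \<bullet> a))"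
    using c by (simp add: inner_sum_right)
  also have "\<dots> > 0"
  proof (rule sum_pos2[OF fin_simple a0(1)])
    show "0 < c a0 * (rho Rp \<bullet> a0)" using a0 rho_simple_pos by simp
    show "0 \<le> c i * (rho Rp \<bullet> i)" if "i \<in> simple" for i
      using c rho_simple_pos that by (simp add: less_imp_le)
  qed
  finally show ?thesis .
qed

end

primrec wrd :: "(real^'n) list \<Rightarrow> (real^'n \<Rightarrow> real^'n)" where
  "wrd [] = id"
| "wrd (a # xs) = refl_root a \<circ> wrd xs"

lemma wrd_append: "wrd (xs @ ys) = wrd xs \<circ> wrd ys"
  by (induction xs) (auto simp: comp_assoc)

context rsys begin

lemma wrd_W: "set xs \<subseteq> R \<Longrightarrow> wrd xs \<in> W"
  by (induction xs) (auto intro: weyl_group.intros)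

lemma wrd_rev: "set xs \<subseteq> R \<Longrightarrow> wrd (rev xs) (wrd xs x) = x"
proof (induction xs arbitrary: x)
  case Nil then show ?case by simp
next
  case (Cons a xs)
  then have "a \<noteq> 0" using nz by auto
  then show ?case using Cons by (simp add: wrd_append refl_refl)
qed

lemma simple_pos_pair: assumes b: "\<beta> \<in> Rp" shows "\<exists>\<alpha>\<in>simple. \<beta> \<bullet> \<alpha> > 0"
proof (rule ccontr)
  assume "\<not> ?thesis"
  then have le: "\<forall>\<alpha>\<in>simple. \<beta> \<bullet> \<alpha> \<le> 0" by auto
  obtain c where c: "\<forall>a\<in>simple. 0 \<le> c a" "\<beta> = (\<Sum>a\<in>simple. c a *\<^sub>R a)" using cone[OF b] by auto
  have "\<beta> \<bullet> \<beta> = (\<Sum>a\<in>simple. c a * (\<beta> \<bullet> a))"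
    by (subst (2) c(2)) (simp add: inner_sum_right)
  also have "\<dots> \<le> 0" using c le by (intro sum_nonpos) (simp add: mult_nonneg_nonpos)
  finally have "\<beta> = 0" by (metis inner_ge_zero inner_eq_zero_iff order_antisym)
  then show False using b Rp_R nz by auto
qed

lemma root_conj_aux: "\<forall>\<beta>\<in>Rp. card {\<gamma>\<in>Rp. \<gamma> \<bullet> g < \<beta> \<bullet> g} = n \<longrightarrow>
   (\<exists>xs \<alpha>. set xs \<subseteq> simple \<and> \<alpha> \<in> simple \<and> wrd xs \<alpha> = \<beta>)"
proof (induction n rule: less_induct)
  case (less n)
  show ?case
  proof (intro ballI impI)
    fix \<beta> assume b: "\<beta> \<in> Rp" and n: "card {\<gamma>\<in>Rp. \<gamma> \<bullet> g < \<beta> \<bullet> g} = n"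
    show "\<exists>xs \<alpha>. set xs \<subseteq> simple \<and> \<alpha> \<in> simple \<and> wrd xs \<alpha> = \<beta>"
    proof (cases "\<beta> \<in> simple")
      case True
      then show ?thesis by (intro exI[of _ "[]"] exI[of _ \<beta>]) auto
    next
      case False
      obtain \<alpha> where al: "\<alpha> \<in> simple" "\<beta> \<bullet> \<alpha> > 0" using simple_pos_pair[OF b] by auto
      have ne: "\<beta> \<noteq> \<alpha>" using al False by auto
      define \<gamma> where "\<gamma> = refl_root \<alpha> \<beta>"
      have gp: "\<gamma> \<in> Rp" unfolding \<gamma>_def using simple_refl_pos al b ne by auto
      have aa: "\<alpha> \<bullet> \<alpha> > 0" using nz simple_R al by auto
      have ag: "\<alpha> \<bullet> g > 0" using Rp_g simple_Rp al by auto
      have "\<gamma> \<bullet> g = \<beta> \<bullet> g - (2 * (\<beta> \<bullet> \<alpha>) / (\<alpha> \<bullet> \<alpha>)) * (\<alpha> \<bullet> g)"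
        unfolding \<gamma>_def refl_root_def by (simp add: inner_diff_left)
      also have "\<dots> < \<beta> \<bullet> g" using al aa ag by simp
      finally have lt: "\<gamma> \<bullet> g < \<beta> \<bullet> g" .
      have "{\<gamma>'\<in>Rp. \<gamma>' \<bullet> g < \<gamma> \<bullet> g} \<subset> {\<gamma>'\<in>Rp. \<gamma>' \<bullet> g < \<beta> \<bullet> g}"
        using lt gp by auto
      then have "card {\<gamma>'\<in>Rp. \<gamma>' \<bullet> g < \<gamma> \<bullet> g} < n"
        using n finRp by (metis (no_types, lifting) mem_Collect_eq psubset_card_mono rev_finite_subset subsetI)
      then obtain xs \<alpha>' where xs: "set xs \<subseteq> simple" "\<alpha>' \<in> simple" "wrd xs \<alpha>' = \<gamma>"
        using less gp by blast
      have "wrd (\<alpha> # xs) \<alpha>' = \<beta>"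
        using xs(3) refl_refl[of \<alpha> \<beta>] aa unfolding \<gamma>_def by auto
      then show ?thesis using xs al by (intro exI[of _ "\<alpha> # xs"] exI[of _ \<alpha>']) auto
    qed
  qed
qed

lemma root_conj: "\<beta> \<in> Rp \<Longrightarrow> \<exists>xs \<alpha>. set xs \<subseteq> simple \<and> \<alpha> \<in> simple \<and> wrd xs \<alpha> = \<beta>"
  using root_conj_aux by blast

lemma simple_sub_R: "simple \<subseteq> R" using simple_Rp Rp_R by auto

lemma refl_word: assumes b: "\<beta> \<in> R" shows "\<exists>xs. set xs \<subseteq> simple \<and> refl_root \<beta> = wrd xs"
proof -
  have "\<exists>xs. set xs \<subseteq> simple \<and> refl_root \<beta>' = wrd xs" if b': "\<beta>' \<in> Rp" for \<beta>'
  proof -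
    obtain ys \<alpha> where ys: "set ys \<subseteq> simple" "\<alpha> \<in> simple" "wrd ys \<alpha> = \<beta>'"
      using root_conj[OF b'] by auto
    have ysR: "set ys \<subseteq> R" using ys simple_sub_R by auto
    have u: "wrd ys \<in> W" using wrd_W[OF ysR] .
    have "refl_root \<beta>' x = wrd (ys @ [\<alpha>] @ rev ys) x" for x
    proof -
      have "wrd (ys @ [\<alpha>] @ rev ys) x = wrd ys (refl_root \<alpha> (wrd (rev ys) x))"
        by (simp add: wrd_append)
      also have "\<dots> = refl_root \<beta>' (wrd ys (wrd (rev ys) x))"
        using W_conj[OF u] ys(3) by simp
      also have "wrd ys (wrd (rev ys) x) = x" using wrd_rev[of "rev ys" x] ysR by simp
      finally show ?thesis by simp
    qed
    then show ?thesis using ys by (intro exI[of _ "ys @ [\<alpha>] @ rev ys"]) auto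
  qed
  then show ?thesis using pos_or_neg[OF b] refl_neg[of \<beta>] by (metis minus_minus)
qed

lemma W_word: "w \<in> W \<Longrightarrow> \<exists>xs. set xs \<subseteq> simple \<and> w = wrd xs"
proof (induction rule: weyl_group.induct)
  case weyl_id then show ?case by (intro exI[of _ "[]"]) auto
next
  case (weyl_step w a)
  then obtain xs ys where "set xs \<subseteq> simple" "w = wrd xs" "set ys \<subseteq> simple" "refl_root a = wrd ys"
    using refl_word by metis
  then show ?case by (intro exI[of _ "ys @ xs"]) (auto simp: wrd_append)
qed

lemma find_flip:
  "\<beta> \<in> Rp \<Longrightarrow> wrd ys \<beta> \<notin> Rp \<Longrightarrow>
    \<exists>us b vs. ys = us @ b # vs \<and> wrd vs \<beta> \<in> Rp \<and> refl_root b (wrd vs \<beta>) \<notin> Rp"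
proof (induction ys)
  case Nil then show ?case by simp
next
  case (Cons a ys)
  show ?case
  proof (cases "wrd ys \<beta> \<in> Rp")
    case True
    then show ?thesis using Cons by (intro exI[of _ "[]"] exI[of _ a] exI[of _ ys]) auto
  next
    case False
    then obtain us b vs where "ys = us @ b # vs" "wrd vs \<beta> \<in> Rp" "refl_root b (wrd vs \<beta>) \<notin> Rp"
      using Cons by blast
    then show ?thesis by (intro exI[of _ "a # us"] exI[of _ b] exI[of _ vs]) auto
  qed
qed

lemma pos_perm_id:
  assumes w: "w \<in> W" and pos: "\<forall>\<beta>\<in>Rp. w \<beta> \<in> Rp"
  shows "w = id"
proof -
  let ?P = "\<lambda>xs. set xs \<subseteq> simple \<and> wrd xs = w"
  obtain xs0 where "?P xs0" using W_word[OF w] by auto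
  then obtain xs where xs: "?P xs" and mn: "\<forall>ys. ?P ys \<longrightarrow> length xs \<le> length ys"
    using ex_has_least_nat[of ?P xs0 length] by blast
  show ?thesis
  proof (cases xs rule: rev_exhaust)
    case Nil then show ?thesis using xs by simp
  next
    case (snoc ys \<alpha>)
    have al: "\<alpha> \<in> simple" and ysS: "set ys \<subseteq> simple" using xs snoc by auto
    have alp: "\<alpha> \<in> Rp" using al simple_Rp by auto
    have anz: "\<alpha> \<noteq> 0" using nz al simple_R by auto
    have ysR: "set ys \<subseteq> R" using ysS simple_sub_R by auto
    have "w \<alpha> = wrd ys (refl_root \<alpha> \<alpha>)" using xs snoc by (auto simp: wrd_append)
    also have "\<dots> = - wrd ys \<alpha>" using refl_self[OF anz] linear_neg[OF W_linear[OF wrd_W[OF ysR]]] by simp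
    finally have "- wrd ys \<alpha> \<in> Rp" using pos alp by metis
    then have "wrd ys \<alpha> \<notin> Rp" using not_both by force
    then obtain us b vs where uv: "ys = us @ b # vs" "wrd vs \<alpha> \<in> Rp" "refl_root b (wrd vs \<alpha>) \<notin> Rp"
      using find_flip[OF alp] by blast
    have bS: "b \<in> simple" and vsS: "set vs \<subseteq> simple" and usS: "set us \<subseteq> simple"
      using uv ysS by auto
    have eqb: "wrd vs \<alpha> = b" using simple_refl_pos[OF bS uv(2)] uv(3) by auto
    have vsW: "wrd vs \<in> W" using wrd_W vsS simple_sub_R by auto
    have bnz: "b \<noteq> 0" using nz bS simple_R by auto
    have "wrd (b # vs @ [\<alpha>]) x = wrd vs x" for x
    proof -
      have "wrd (b # vs @ [\<alpha>]) x = refl_root b (wrd vs (refl_root \<alpha> x))" by (simp add: wrd_append)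
      also have "\<dots> = refl_root b (refl_root b (wrd vs x))" using W_conj[OF vsW] eqb by simp
      also have "\<dots> = wrd vs x" using refl_refl[OF bnz] by simp
      finally show ?thesis .
    qed
    then have "wrd (b # vs @ [\<alpha>]) = wrd vs" by auto
    then have "wrd (us @ vs) = w" using xs snoc uv by (simp add: wrd_append)
    moreover have "set (us @ vs) \<subseteq> simple" using usS vsS by auto
    ultimately have "length xs \<le> length (us @ vs)" using mn by blast
    then show ?thesis using snoc uv by simp
  qed
qed

lemma stab_rho: assumes w: "w \<in> W" and fx: "w (rho Rp) = rho Rp" shows "w = id"
proof (rule pos_perm_id[OF w], intro ballI)
  fix \<beta> assume b: "\<beta> \<in> Rp"
  have wb: "w \<beta> \<in> R" using W_R w b Rp_R by auto
  have "w \<beta> \<bullet> rho Rp = \<beta> \<bullet> rho Rp" using W_inner[OF w, of \<beta> "rho Rp"] fx by simp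
  then have pos: "rho Rp \<bullet> w \<beta> > 0" using rho_pos[OF b] by (simp add: inner_commute)
  show "w \<beta> \<in> Rp"
  proof (rule ccontr)
    assume "w \<beta> \<notin> Rp"
    then have "- w \<beta> \<in> Rp" using pos_or_neg wb by auto
    then show False using rho_pos pos by fastforce
  qed
qed

end

definition dt :: "(real^'n \<Rightarrow> real^'n) \<Rightarrow> real" where
  "dt w = det (matrix w)"

lemma dt_comp: "linear f \<Longrightarrow> linear h \<Longrightarrow> dt (f \<circ> h) = dt f * dt h"
  unfolding dt_def by (simp add: matrix_compose det_mul)

lemma dt_id: "dt id = 1"
  unfolding dt_def by (simp add: matrix_id_mat_1)

lemma dt_id': "dt (\<lambda>x::real^'n. x) = 1" using dt_id by (simp add: id_def)

lemma refl_scale: "c \<noteq> 0 \<Longrightarrow> refl_root (c *\<^sub>R a) = refl_root a"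
  unfolding refl_root_def by (auto simp: fun_eq_iff field_simps)

lemma dt_refl_axis: "dt (refl_root (axis k (1::real))) = -1"
proof -
  let ?A = "matrix (refl_root (axis k (1::real)))"
  have ent: "?A $ i $ j = (if i = j then (if j = k then -1 else 1) else 0)" for i j
  proof -
    have r: "refl_root (axis k (1::real)) (axis j 1) = (if j = k then - axis k 1 else axis j 1)"
      unfolding refl_root_def by (simp add: inner_axis_axis vec_eq_iff)
    show ?thesis unfolding matrix_def vec_lambda_beta r by (auto simp: axis_def)
  qed
  have "det ?A = prod (\<lambda>i. ?A$i$i) UNIV"
    by (rule det_diagonal) (simp add: ent)
  also have "\<dots> = prod (\<lambda>i. if i = k then -1 else 1) UNIV"
    by (simp add: ent)
  also have "\<dots> = -1"
    by (simp add: prod.If_cases)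
  finally show ?thesis unfolding dt_def .
qed

lemma dt_refl: assumes a: "a \<noteq> (0::real^'n)" shows "dt (refl_root a) = -1"
proof -
  fix k :: 'n
  let ?b = "norm a *\<^sub>R axis k (1::real)"
  have "norm a = norm ?b" by simp
  then obtain f where f: "orthogonal_transformation f" "f a = ?b"
    using orthogonal_transformation_exists by metis
  have lf: "linear f" using f unfolding orthogonal_transformation_def by auto
  have fi: "f x \<bullet> f z = x \<bullet> z" for x z using f unfolding orthogonal_transformation_def by auto
  have conj: "f \<circ> refl_root a = refl_root (f a) \<circ> f"
  proof
    fix x
    have "f (refl_root a x) = f x - (2 * (x \<bullet> a) / (a \<bullet> a)) *\<^sub>R f a"
      unfolding refl_root_def using lf by (simp add: linear_diff linear_scale)
    then show "(f \<circ> refl_root a) x = (refl_root (f a) \<circ> f) x" unfolding refl_root_def by (simp add: fi)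
  qed
  have "refl_root (f a) = refl_root (axis k 1)" using f(2) refl_scale[of "norm a" "axis k 1"] a by simp
  then have "dt f * dt (refl_root a) = - dt f"
  proof -
    assume e: "refl_root (f a) = refl_root (axis k 1)"
    have "dt f * dt (refl_root a) = dt (f \<circ> refl_root a)" using dt_comp[OF lf refl_linear] by simp
    also have "\<dots> = dt (refl_root (axis k 1) \<circ> f)" using conj e by simp
    also have "\<dots> = - dt f" using dt_comp[OF refl_linear lf] dt_refl_axis[of k] by simp
    finally show ?thesis .
  qed
  moreover have "dt f \<noteq> 0"
    using f det_orthogonal_matrix orthogonal_transformation_matrix unfolding dt_def by fastforce
  ultimately show ?thesis by (metis mult_cancel_left mult_minus1_right)
qed

context rsys begin

lemma dt_W: "w \<in> W \<Longrightarrow> dt w = 1 \<or> dt w = -1"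
proof (induction rule: weyl_group.induct)
  case weyl_id
  have "dt (id :: real^'n \<Rightarrow> real^'n) = 1" by (rule dt_id)
  then show ?case by (simp add: id_def)
next
  case (weyl_step w a)
  have "dt (refl_root a) = -1" using dt_refl nz weyl_step by auto
  then have "dt (refl_root a \<circ> w) = - dt w"
    using dt_comp[OF refl_linear W_linear[OF weyl_step(1)]] by simp
  then show ?case using weyl_step.IH unfolding o_def by auto
qed

lemma dt_sq: "w \<in> W \<Longrightarrow> dt w * dt w = 1" using dt_W by fastforce

lemma dt_Wcomp: "w \<in> W \<Longrightarrow> u \<in> W \<Longrightarrow> dt (w \<circ> u) = dt w * dt u"
  using dt_comp W_linear by blast

lemma dt_winv: "w \<in> W \<Longrightarrow> dt (winv w) = dt w"
proof -
  assume w: "w \<in> W"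
  have "dt (winv w) * dt w = dt (winv w \<circ> w)" using dt_Wcomp[OF winv(1)[OF w] w] by simp
  also have "\<dots> = 1" using winv(2)[OF w] dt_id by simp
  finally have "dt (winv w) * dt w = 1" .
  then show ?thesis using dt_W[OF w] by auto
qed

abbreviation "delta \<equiv> weyl_delta Rp"

lemma refl_adj: "a \<noteq> 0 \<Longrightarrow> x \<bullet> refl_root a z = refl_root a x \<bullet> z"
  unfolding refl_root_def by (simp add: inner_diff_left inner_diff_right inner_commute)

lemma delta_refl: assumes al: "\<alpha> \<in> simple" shows "delta (refl_root \<alpha> y) = - delta y"
proof -
  let ?f = "\<lambda>x::real. exp (x / 2) - exp (- x / 2)"
  have anz: "\<alpha> \<noteq> 0" using nz simple_R al by auto
  have alp: "\<alpha> \<in> Rp" using al simple_Rp by auto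
  have dl: "delta z = (\<Prod>a\<in>Rp. ?f (a \<bullet> z))" for z unfolding weyl_delta_def by simp
  have "delta (refl_root \<alpha> y) = (\<Prod>a\<in>Rp. ?f (refl_root \<alpha> a \<bullet> y))"
    unfolding dl by (rule prod.cong[OF refl]) (simp only: refl_adj[OF anz])
  also have "\<dots> = ?f (refl_root \<alpha> \<alpha> \<bullet> y) * (\<Prod>a\<in>Rp - {\<alpha>}. ?f (refl_root \<alpha> a \<bullet> y))"
    by (rule prod.remove[OF finRp alp])
  also have "(\<Prod>a\<in>Rp - {\<alpha>}. ?f (refl_root \<alpha> a \<bullet> y)) = (\<Prod>a\<in>Rp - {\<alpha>}. ?f (a \<bullet> y))"
    using prod.reindex_bij_betw[OF simple_refl_bij[OF al], of "\<lambda>a. ?f (a \<bullet> y)"] by simp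
  also have "?f (refl_root \<alpha> \<alpha> \<bullet> y) = - ?f (\<alpha> \<bullet> y)" using refl_self[OF anz] by simp
  also have "- ?f (\<alpha> \<bullet> y) * (\<Prod>a\<in>Rp - {\<alpha>}. ?f (a \<bullet> y)) = - delta y"
    unfolding dl prod.remove[OF finRp alp, of "\<lambda>a. ?f (a \<bullet> y)"] by (simp add: algebra_simps)
  finally show ?thesis .
qed

lemma delta_W: assumes w: "w \<in> W" shows "delta (w y) = dt w * delta y"
proof -
  have "set xs \<subseteq> simple \<Longrightarrow> delta (wrd xs y) = dt (wrd xs) * delta y" for xs
  proof (induction xs)
    case Nil then show ?case by (simp add: dt_id')
  next
    case (Cons a xs)
    have aS: "a \<in> simple" and xsS: "set xs \<subseteq> simple" using Cons by auto
    have "dt (refl_root a) = -1" using dt_refl nz aS simple_R by auto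
    moreover have "set xs \<subseteq> R" using xsS simple_sub_R by auto
    ultimately have "dt (wrd (a # xs)) = - dt (wrd xs)"
      using dt_comp[OF refl_linear W_linear[OF wrd_W]] by simp
    then show ?case using Cons delta_refl[OF aS] by (simp add: o_def)
  qed
  then show ?thesis using W_word[OF w] by auto
qed

definition alt :: "real^'n \<Rightarrow> real^'n \<Rightarrow> real" where
  "alt \<mu> y = (\<Sum>w\<in>W. dt w * exp (w \<mu> \<bullet> y))"

lemma alt_shift: assumes u: "u \<in> W" shows "alt (u \<mu>) y = dt u * alt \<mu> y"
proof -
  have "alt \<mu> y = (\<Sum>w\<in>W. dt (w \<circ> u) * exp ((w \<circ> u) \<mu> \<bullet> y))"
    unfolding alt_def using sum.reindex_bij_betw[OF W_rmult_bij[OF u], of "\<lambda>w. dt w * exp (w \<mu> \<bullet> y)"]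
    by simp
  also have "\<dots> = dt u * alt (u \<mu>) y"
    unfolding alt_def sum_distrib_left
    by (rule sum.cong) (use dt_Wcomp u in auto)
  finally show ?thesis using dt_sq[OF u] by (metis mult.assoc mult_1)
qed

lemma alt_sing: assumes b: "\<beta> \<in> R" and o: "\<mu> \<bullet> \<beta> = 0" shows "alt \<mu> y = 0"
proof -
  have "refl_root \<beta> \<mu> = \<mu>" using o unfolding refl_root_def by simp
  moreover have "dt (refl_root \<beta>) = -1" using dt_refl nz b by auto
  ultimately have "alt \<mu> y = - alt \<mu> y"
    using alt_shift[OF W_refl[OF b], of \<mu> y] by simp
  then show ?thesis by simp
qed

end

lemma explim: "(c::real) < 0 \<Longrightarrow> ((\<lambda>s. exp (s * c)) \<longlongrightarrow> 0) at_top"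
  by real_asymp

context rsys begin

abbreviation "rh \<equiv> rho Rp"

lemma delta_expand:
  "delta y = (\<Sum>S\<in>Pow Rp. (-1) ^ card S * exp ((rh - \<Sum>S) \<bullet> y))"
proof -
  have "delta y = (\<Prod>a\<in>Rp. (- exp (- (a \<bullet> y) / 2)) + exp ((a \<bullet> y) / 2))"
    unfolding weyl_delta_def by simp
  also have "\<dots> = (\<Sum>X\<in>Pow Rp. (\<Prod>a\<in>X. - exp (- (a \<bullet> y) / 2)) * (\<Prod>a\<in>Rp - X. exp ((a \<bullet> y) / 2)))"
    by (rule prod_add[OF finRp])
  also have "\<dots> = (\<Sum>S\<in>Pow Rp. (-1) ^ card S * exp ((rh - \<Sum>S) \<bullet> y))"
  proof (rule sum.cong[OF refl])
    fix X assume X: "X \<in> Pow Rp"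
    have fX: "finite X" using X finRp finite_subset by auto
    have "(\<Prod>a\<in>X. - exp (- (a \<bullet> y) / 2)) = (-1) ^ card X * (\<Prod>a\<in>X. exp (- (a \<bullet> y) / 2))"
      by (simp add: prod_uminus)
    also have "(\<Prod>a\<in>X. exp (- (a \<bullet> y) / 2)) = exp (\<Sum>a\<in>X. - (a \<bullet> y) / 2)"
      by (simp add: exp_sum fX)
    finally have 1: "(\<Prod>a\<in>X. - exp (- (a \<bullet> y) / 2)) = (-1) ^ card X * exp (\<Sum>a\<in>X. - (a \<bullet> y) / 2)" .
    have 2: "(\<Prod>a\<in>Rp - X. exp ((a \<bullet> y) / 2)) = exp (\<Sum>a\<in>Rp - X. (a \<bullet> y) / 2)"
      by (simp add: exp_sum finRp)
    have sd: "(\<Sum>Rp) = (\<Sum>(Rp - X)) + (\<Sum>X)"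
      using sum.subset_diff[of X Rp "\<lambda>a. a"] X finRp by auto
    have "(rh - \<Sum>X) \<bullet> y = (\<Sum>a\<in>X. - (a \<bullet> y) / 2) + (\<Sum>a\<in>Rp - X. (a \<bullet> y) / 2)"
      unfolding rho_def sd
      by (simp add: inner_diff_left inner_add_left inner_sum_left sum_divide_distrib[symmetric]
          sum_negf algebra_simps)
    then show "(\<Prod>a\<in>X. - exp (- (a \<bullet> y) / 2)) * (\<Prod>a\<in>Rp - X. exp ((a \<bullet> y) / 2)) =
        (-1) ^ card X * exp ((rh - \<Sum>X) \<bullet> y)"
      unfolding 1 2 by (simp add: exp_add)
  qed
  finally show ?thesis .
qed

lemma sum_W_inv: "(\<Sum>w\<in>W. dt w * exp (\<mu> \<bullet> w y)) = alt \<mu> y"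
proof -
  have "(\<Sum>w\<in>W. dt w * exp (\<mu> \<bullet> w y)) = (\<Sum>w\<in>W. dt (winv w) * exp (winv w \<mu> \<bullet> y))"
  proof (rule sum.cong[OF refl])
    fix w assume w: "w \<in> W"
    have "\<mu> \<bullet> w y = w (winv w \<mu>) \<bullet> w y" using winv_app(2)[OF w] by simp
    also have "\<dots> = winv w \<mu> \<bullet> y" using W_inner[OF w] by simp
    finally show "dt w * exp (\<mu> \<bullet> w y) = dt (winv w) * exp (winv w \<mu> \<bullet> y)"
      using dt_winv[OF w] by simp
  qed
  also have "\<dots> = alt \<mu> y"
    unfolding alt_def using sum.reindex_bij_betw[OF W_inv_bij, of "\<lambda>v. dt v * exp (v \<mu> \<bullet> y)"]
    by simp
  finally show ?thesis .
qed

lemma card_delta: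
  "real (card W) * delta y = (\<Sum>S\<in>Pow Rp. (-1) ^ card S * alt (rh - \<Sum>S) y)"
proof -
  have "real (card W) * delta y = (\<Sum>w\<in>W. dt w * delta (w y))"
    using delta_W dt_sq by (simp add: mult.assoc[symmetric])
  also have "\<dots> = (\<Sum>w\<in>W. \<Sum>S\<in>Pow Rp. (-1) ^ card S * (dt w * exp ((rh - \<Sum>S) \<bullet> w y)))"
    unfolding delta_expand sum_distrib_left by (simp add: algebra_simps)
  also have "\<dots> = (\<Sum>S\<in>Pow Rp. (-1) ^ card S * (\<Sum>w\<in>W. dt w * exp ((rh - \<Sum>S) \<bullet> w y)))"
    by (subst sum.swap) (simp add: sum_distrib_left)
  also have "\<dots> = (\<Sum>S\<in>Pow Rp. (-1) ^ card S * alt (rh - \<Sum>S) y)"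
    by (simp add: sum_W_inv)
  finally show ?thesis .
qed

lemma refl_mu:
  assumes al: "\<alpha> \<in> simple" and S: "S \<subseteq> Rp"
  shows "\<exists>S'\<subseteq>Rp. refl_root \<alpha> (rh - \<Sum>S) = rh - \<Sum>S'"
proof -
  have anz: "\<alpha> \<noteq> 0" using nz simple_R al by auto
  have alp: "\<alpha> \<in> Rp" using al simple_Rp by auto
  have inj: "inj (refl_root \<alpha>)" by (metis injI refl_refl[OF anz])
  have fS: "finite S" using S finRp finite_subset by auto
  have lin: "refl_root \<alpha> (rh - \<Sum>S) = rh - \<alpha> - (\<Sum>b\<in>S. refl_root \<alpha> b)"
    by (simp add: rho_refl[OF al] linear_diff[OF refl_linear] linear_sum[OF refl_linear])
  show ?thesis
  proof (cases "\<alpha> \<in> S")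
    case True
    have sub: "S - {\<alpha>} \<subseteq> Rp - {\<alpha>}" using S by auto
    have "(\<Sum>b\<in>S. refl_root \<alpha> b) = refl_root \<alpha> \<alpha> + (\<Sum>b\<in>S - {\<alpha>}. refl_root \<alpha> b)"
      by (rule sum.remove[OF fS True])
    also have "(\<Sum>b\<in>S - {\<alpha>}. refl_root \<alpha> b) = \<Sum>(refl_root \<alpha> ` (S - {\<alpha>}))"
      using sum.reindex[of "refl_root \<alpha>" "S - {\<alpha>}" "\<lambda>x. x"] inj by (simp add: inj_on_def inj_def)
    finally have "refl_root \<alpha> (rh - \<Sum>S) = rh - \<Sum>(refl_root \<alpha> ` (S - {\<alpha>}))"
      using lin refl_self[OF anz] by simp
    moreover have "refl_root \<alpha> ` (S - {\<alpha>}) \<subseteq> Rp"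
      using simple_refl_bij[OF al] sub unfolding bij_betw_def by auto
    ultimately show ?thesis by blast
  next
    case False
    have sub: "S \<subseteq> Rp - {\<alpha>}" using S False by auto
    have img: "refl_root \<alpha> ` S \<subseteq> Rp - {\<alpha>}"
      using simple_refl_bij[OF al] sub unfolding bij_betw_def by auto
    have "(\<Sum>b\<in>S. refl_root \<alpha> b) = \<Sum>(refl_root \<alpha> ` S)"
      using sum.reindex[of "refl_root \<alpha>" S "\<lambda>x. x"] inj by (simp add: inj_on_def inj_def)
    moreover have "\<Sum>(insert \<alpha> (refl_root \<alpha> ` S)) = \<alpha> + \<Sum>(refl_root \<alpha> ` S)"
      using img fS by (subst sum.insert) auto
    ultimately have "refl_root \<alpha> (rh - \<Sum>S) = rh - \<Sum>(insert \<alpha> (refl_root \<alpha> ` S))"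
      using lin by (simp add: algebra_simps)
    moreover have "insert \<alpha> (refl_root \<alpha> ` S) \<subseteq> Rp" using img alp by auto
    ultimately show ?thesis by blast
  qed
qed

lemma word_mu:
  assumes u: "u \<in> W" and S: "S \<subseteq> Rp"
  shows "\<exists>S'\<subseteq>Rp. u (rh - \<Sum>S) = rh - \<Sum>S'"
proof -
  have "set xs \<subseteq> simple \<Longrightarrow> \<exists>S'\<subseteq>Rp. wrd xs (rh - \<Sum>S) = rh - \<Sum>S'" for xs
  proof (induction xs)
    case Nil then show ?case using S by auto
  next
    case (Cons a xs)
    then obtain S1 where S1: "S1 \<subseteq> Rp" "wrd xs (rh - \<Sum>S) = rh - \<Sum>S1" by auto
    obtain S2 where "S2 \<subseteq> Rp" "refl_root a (rh - \<Sum>S1) = rh - \<Sum>S2"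
      using refl_mu[OF _ S1(1), of a] Cons by auto
    then show ?case using S1 by auto
  qed
  then show ?thesis using W_word[OF u] by auto
qed

lemma dom_rho:
  assumes S: "S \<subseteq> Rp" and dom: "\<forall>\<alpha>\<in>simple. (rh - \<Sum>S) \<bullet> \<alpha> > 0"
  shows "\<Sum>S = 0"
proof -
  let ?s = "\<Sum>S"
  have fS: "finite S" using S finRp finite_subset by auto
  have neg: "?s \<bullet> \<alpha> \<le> 0" if al: "\<alpha> \<in> simple" for \<alpha>
  proof -
    have aa: "\<alpha> \<bullet> \<alpha> > 0" using nz simple_R al by auto
    have z: "2 * (?s \<bullet> \<alpha>) / (\<alpha> \<bullet> \<alpha>) \<in> \<int>"
    proof -
      have "2 * (?s \<bullet> \<alpha>) / (\<alpha> \<bullet> \<alpha>) = (\<Sum>b\<in>S. 2 * (b \<bullet> \<alpha>) / (\<alpha> \<bullet> \<alpha>))"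
        by (simp add: inner_sum_left sum_distrib_left sum_divide_distrib)
      also have "\<dots> \<in> \<int>" using integR simple_R al S Rp_R by (intro Ints_sum) auto
      finally show ?thesis .
    qed
    have "2 * ((rh - ?s) \<bullet> \<alpha>) / (\<alpha> \<bullet> \<alpha>) = 1 - 2 * (?s \<bullet> \<alpha>) / (\<alpha> \<bullet> \<alpha>)"
      using rho_simple[OF al] aa by (simp add: inner_diff_left diff_divide_distrib right_diff_distrib)
    moreover have "2 * ((rh - ?s) \<bullet> \<alpha>) / (\<alpha> \<bullet> \<alpha>) > 0" using dom al aa by simp
    ultimately have "1 - 2 * (?s \<bullet> \<alpha>) / (\<alpha> \<bullet> \<alpha>) > 0" by simp
    moreover obtain i :: int where i: "2 * (?s \<bullet> \<alpha>) / (\<alpha> \<bullet> \<alpha>) = of_int i" using z by (auto elim: Ints_cases)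
    ultimately have "i < 1" by simp
    then have "i \<le> 0" by simp
    then have "2 * (?s \<bullet> \<alpha>) / (\<alpha> \<bullet> \<alpha>) \<le> 0" using i by simp
    then show ?thesis using aa by (simp add: divide_le_0_iff)
  qed
  have "?s \<bullet> b \<le> 0" if b: "b \<in> S" for b
  proof -
    obtain c where c: "\<forall>a\<in>simple. 0 \<le> c a" "b = (\<Sum>a\<in>simple. c a *\<^sub>R a)" using cone b S by blast
    have "?s \<bullet> b = (\<Sum>a\<in>simple. c a * (?s \<bullet> a))" by (subst c(2)) (simp add: inner_sum_right)
    also have "\<dots> \<le> 0" using c neg by (intro sum_nonpos) (simp add: mult_nonneg_nonpos)
    finally show ?thesis .
  qed
  then have "(\<Sum>b\<in>S. ?s \<bullet> b) \<le> 0" by (intro sum_nonpos) auto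
  then have "?s \<bullet> ?s \<le> 0" by (simp add: inner_sum_right)
  then show ?thesis by (metis inner_ge_zero inner_eq_zero_iff order_antisym)
qed

lemma conj_rho:
  assumes S: "S \<subseteq> Rp" and reg: "\<forall>\<beta>\<in>R. (rh - \<Sum>S) \<bullet> \<beta> \<noteq> 0"
  shows "\<exists>u\<in>W. u (rh - \<Sum>S) = rh"
proof -
  let ?\<mu> = "rh - \<Sum>S"
  let ?F = "\<lambda>v. v ?\<mu> \<bullet> rh"
  have ne: "W \<noteq> {}" using W_id by auto
  define M where "M = Max (?F ` W)"
  have "M \<in> ?F ` W" unfolding M_def using finite_W ne by (intro Max_in) auto
  then obtain u where u: "u \<in> W" "?F u = M" by auto
  have mx: "?F v \<le> ?F u" if "v \<in> W" for v
  proof -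
    have "?F v \<le> M" unfolding M_def using that finite_W by (intro Max_ge) auto
    then show ?thesis using u(2) by simp
  qed
  have dom: "\<forall>\<alpha>\<in>simple. u ?\<mu> \<bullet> \<alpha> > 0"
  proof
    fix \<alpha> assume al: "\<alpha> \<in> simple"
    have anz: "\<alpha> \<noteq> 0" using nz simple_R al by auto
    have "refl_root \<alpha> \<circ> u \<in> W" using W_comp[OF W_refl[OF simple_R[OF al]] u(1)] .
    then have "?F (refl_root \<alpha> \<circ> u) \<le> ?F u" using mx by blast
    moreover have "?F (refl_root \<alpha> \<circ> u) = u ?\<mu> \<bullet> rh - u ?\<mu> \<bullet> \<alpha>"
      using refl_adj[OF anz, of "u ?\<mu>" rh] rho_refl[OF al] by (simp add: inner_diff_right)
    ultimately have ge: "u ?\<mu> \<bullet> \<alpha> \<ge> 0" by simp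
    have "u ?\<mu> \<bullet> \<alpha> = u ?\<mu> \<bullet> u (winv u \<alpha>)" using winv_app(2)[OF u(1)] by simp
    also have "\<dots> = ?\<mu> \<bullet> winv u \<alpha>" using W_inner[OF u(1)] by simp
    also have "\<dots> \<noteq> 0" using reg W_R[OF winv(1)[OF u(1)] simple_R[OF al]] by auto
    finally show "u ?\<mu> \<bullet> \<alpha> > 0" using ge by simp
  qed
  obtain S' where S': "S' \<subseteq> Rp" "u ?\<mu> = rh - \<Sum>S'" using word_mu[OF u(1) S] by auto
  then have "\<Sum>S' = 0" using dom_rho[OF S'(1)] dom by simp
  then show ?thesis using S' u by auto
qed

lemma alt_const: assumes S: "S \<subseteq> Rp" shows "\<exists>c. \<forall>y. alt (rh - \<Sum>S) y = c * alt rh y"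
proof (cases "\<exists>\<beta>\<in>R. (rh - \<Sum>S) \<bullet> \<beta> = 0")
  case True
  then show ?thesis using alt_sing by (intro exI[of _ 0]) auto
next
  case False
  then obtain u where u: "u \<in> W" "u (rh - \<Sum>S) = rh" using conj_rho[OF S] by auto
  have "alt (rh - \<Sum>S) y = dt u * alt rh y" for y
    using alt_shift[OF u(1), of "rh - \<Sum>S" y] u(2) dt_sq[OF u(1)] by (metis mult.assoc mult_1)
  then show ?thesis by blast
qed

end

context rsys begin

lemma m_exists: "\<exists>m. \<forall>y. real (card W) * delta y = m * alt rh y"
proof -
  define c where "c S = (SOME c. \<forall>y. alt (rh - \<Sum>S) y = c * alt rh y)" for S
  have c: "alt (rh - \<Sum>S) y = c S * alt rh y" if "S \<in> Pow Rp" for S y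
  proof -
    have S: "S \<subseteq> Rp" using that by simp
    have "\<forall>y. alt (rh - \<Sum>S) y = c S * alt rh y" unfolding c_def by (rule someI_ex[OF alt_const[OF S]])
    then show ?thesis by blast
  qed
  have "real (card W) * delta y = (\<Sum>S\<in>Pow Rp. (-1) ^ card S * c S) * alt rh y" for y
  proof -
    have "real (card W) * delta y = (\<Sum>S\<in>Pow Rp. (-1) ^ card S * c S * alt rh y)"
      unfolding card_delta
    proof (rule sum.cong[OF refl])
      fix S assume S: "S \<in> Pow Rp"
      show "(-1) ^ card S * alt (rh - \<Sum>S) y = (-1) ^ card S * c S * alt rh y"
        by (simp only: c[OF S] mult.assoc)
    qed
    also have "\<dots> = (\<Sum>S\<in>Pow Rp. (-1) ^ card S * c S) * alt rh y"
      by (rule sum_distrib_right[symmetric])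
    finally show ?thesis .
  qed
  then show ?thesis by blast
qed

lemma rhrh: "rh \<bullet> rh = (\<Sum>a\<in>Rp. a \<bullet> rh) / 2"
proof -
  have "rh \<bullet> rh = ((1/2) *\<^sub>R (\<Sum>Rp)) \<bullet> rh" by (subst (1) rho_def) (rule refl)
  also have "\<dots> = (\<Sum>a\<in>Rp. a \<bullet> rh) / 2" by (simp only: inner_scaleR_left inner_sum_left)
  finally show ?thesis .
qed

lemma lim1: "((\<lambda>s. delta (s *\<^sub>R rh) * exp (- (s * (rh \<bullet> rh)))) \<longlongrightarrow> 1) at_top"
proof -
  have eq: "delta (s *\<^sub>R rh) * exp (- (s * (rh \<bullet> rh))) = (\<Prod>a\<in>Rp. 1 - exp (s * (- (a \<bullet> rh))))" for s
  proof -
    have "exp (- (s * (rh \<bullet> rh))) = exp (\<Sum>a\<in>Rp. - (s * (a \<bullet> rh)) / 2)"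
      unfolding rhrh by (simp add: sum_distrib_left sum_divide_distrib sum_negf)
    also have "\<dots> = (\<Prod>a\<in>Rp. exp (- (s * (a \<bullet> rh)) / 2))" by (simp add: exp_sum finRp)
    finally have 1: "exp (- (s * (rh \<bullet> rh))) = (\<Prod>a\<in>Rp. exp (- (s * (a \<bullet> rh)) / 2))" .
    have 2: "delta (s *\<^sub>R rh) = (\<Prod>a\<in>Rp. exp ((s * (a \<bullet> rh)) / 2) - exp (- (s * (a \<bullet> rh)) / 2))"
      unfolding weyl_delta_def by simp
    have 3: "(exp (x / 2) - exp (- (x / 2))) * exp (- (x / 2)) = 1 - exp (- x)" for x :: real
      by (simp add: left_diff_distrib flip: exp_add)
    show ?thesis unfolding 1 2 prod.distrib[symmetric] by (simp add: 3)
  qed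
  have "((\<lambda>s. \<Prod>a\<in>Rp. 1 - exp (s * (- (a \<bullet> rh)))) \<longlongrightarrow> (\<Prod>a\<in>Rp. 1 - 0)) at_top"
  proof (rule tendsto_prod)
    fix a assume a: "a \<in> Rp"
    have "- (a \<bullet> rh) < 0" using rho_pos[OF a] by (simp add: inner_commute)
    then show "((\<lambda>s. 1 - exp (s * (- (a \<bullet> rh)))) \<longlongrightarrow> 1 - 0) at_top"
      by (intro tendsto_diff tendsto_const explim)
  qed
  then show ?thesis unfolding eq by simp
qed

lemma lim2: "((\<lambda>s. alt rh (s *\<^sub>R rh) * exp (- (s * (rh \<bullet> rh)))) \<longlongrightarrow> 1) at_top"
proof -
  have eq: "alt rh (s *\<^sub>R rh) * exp (- (s * (rh \<bullet> rh))) = (\<Sum>w\<in>W. dt w * exp (s * (w rh \<bullet> rh - rh \<bullet> rh)))" for s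
    unfolding alt_def sum_distrib_right
    by (rule sum.cong[OF refl]) (simp add: mult.assoc algebra_simps flip: exp_add)
  have "((\<lambda>s. \<Sum>w\<in>W. dt w * exp (s * (w rh \<bullet> rh - rh \<bullet> rh))) \<longlongrightarrow> (\<Sum>w\<in>W. dt w * (if w = id then 1 else 0))) at_top"
  proof (rule tendsto_sum)
    fix w assume w: "w \<in> W"
    show "((\<lambda>s. dt w * exp (s * (w rh \<bullet> rh - rh \<bullet> rh))) \<longlongrightarrow> dt w * (if w = id then 1 else 0)) at_top"
    proof (cases "w = id")
      case True then show ?thesis by simp
    next
      case False
      then have ne: "w rh \<noteq> rh" using stab_rho[OF w] by auto
      have "0 < (w rh - rh) \<bullet> (w rh - rh)" using ne by simp
      also have "\<dots> = w rh \<bullet> w rh - 2 * (w rh \<bullet> rh) + rh \<bullet> rh"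
        by (simp add: inner_diff_left inner_diff_right inner_commute)
      also have "w rh \<bullet> w rh = rh \<bullet> rh" using W_inner[OF w] by simp
      finally have "w rh \<bullet> rh - rh \<bullet> rh < 0" by simp
      then have "((\<lambda>s. exp (s * (w rh \<bullet> rh - rh \<bullet> rh))) \<longlongrightarrow> 0) at_top" by (rule explim)
      then have "((\<lambda>s. dt w * exp (s * (w rh \<bullet> rh - rh \<bullet> rh))) \<longlongrightarrow> dt w * 0) at_top"
        by (intro tendsto_mult tendsto_const)
      then show ?thesis using False by simp
    qed
  qed
  moreover have "(\<Sum>w\<in>W. dt w * (if w = id then 1 else 0)) = 1"
    using finite_W W_id dt_id by (simp add: if_distrib sum.delta cong: if_cong)
  ultimately show ?thesis unfolding eq by simp
qed

theorem weyl_den: "alt rh y = delta y"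
proof -
  obtain m where m: "\<And>y. real (card W) * delta y = m * alt rh y" using m_exists by blast
  let ?e = "\<lambda>s. exp (- (s * (rh \<bullet> rh)))"
  have E: "(\<lambda>s. real (card W) * (delta (s *\<^sub>R rh) * ?e s)) = (\<lambda>s. m * (alt rh (s *\<^sub>R rh) * ?e s))"
  proof
    fix s
    have "real (card W) * (delta (s *\<^sub>R rh) * ?e s) = (real (card W) * delta (s *\<^sub>R rh)) * ?e s"
      by (simp only: mult.assoc)
    also have "\<dots> = (m * alt rh (s *\<^sub>R rh)) * ?e s" by (simp only: m)
    also have "\<dots> = m * (alt rh (s *\<^sub>R rh) * ?e s)" by (simp only: mult.assoc)
    finally show "real (card W) * (delta (s *\<^sub>R rh) * ?e s) = m * (alt rh (s *\<^sub>R rh) * ?e s)" .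
  qed
  have L: "((\<lambda>s. real (card W) * (delta (s *\<^sub>R rh) * ?e s)) \<longlongrightarrow> real (card W) * 1) at_top"
    by (intro tendsto_mult tendsto_const lim1)
  have R: "((\<lambda>s. real (card W) * (delta (s *\<^sub>R rh) * ?e s)) \<longlongrightarrow> m * 1) at_top"
    unfolding E by (intro tendsto_mult tendsto_const lim2)
  have "real (card W) * 1 = m * 1" by (rule tendsto_unique[OF trivial_limit_at_top_linorder L R])
  then have mW: "m = real (card W)" by simp
  have "card W > 0" using finite_W W_id card_gt_0_iff by blast
  then show ?thesis using m[of y] mW by simp
qed

end

lemma factor_id:
  fixes x L :: real assumes x: "x \<noteq> 0"
  shows "(1 - exp L * exp x) / (1 - exp x) =
         exp (L / 2) * (exp ((x + L) / 2) - exp (- ((x + L) / 2))) / (exp (x / 2) - exp (- (x / 2)))"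
proof -
  define A where "A = exp (x / 2)"
  define B where "B = exp (L / 2)"
  have A: "A > 0" and B: "B > 0" unfolding A_def B_def by auto
  have ex: "exp x = A * A" unfolding A_def by (simp flip: exp_add)
  have eL: "exp L = B * B" unfolding B_def by (simp flip: exp_add)
  have em: "exp (- (x / 2)) = 1 / A" unfolding A_def by (simp add: exp_minus field_simps)
  have exL: "exp ((x + L) / 2) = A * B" unfolding A_def B_def by (simp flip: exp_add add: add_divide_distrib)
  have emL: "exp (- ((x + L) / 2)) = 1 / (A * B)" using exL by (simp add: exp_minus field_simps)
  have d1: "1 - A * A \<noteq> 0" using x ex by (metis exp_eq_one_iff eq_iff_diff_eq_0)
  have d2: "A - 1 / A \<noteq> 0" using d1 A by (simp add: field_simps)
  show ?thesis unfolding ex eL em exL emL B_def[symmetric] A_def[symmetric] using d1 d2 A B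
    by (simp add: field_simps)
qed

context rsys begin

lemma delta_nz: assumes z: "\<forall>a\<in>Rp. a \<bullet> z \<noteq> 0" shows "delta z \<noteq> 0"
  unfolding weyl_delta_def using z finRp by (auto simp: prod_zero_iff)

lemma ratio_K:
  assumes t: "t > 0" and z: "\<forall>a\<in>Rp. a \<bullet> z \<noteq> 0"
  shows "(\<Prod>a\<in>Rp. (1 - t powr (p \<bullet> a) * exp (a \<bullet> z)) / (1 - exp (a \<bullet> z)))
         = t powr (p \<bullet> rh) * delta (z + ln t *\<^sub>R p) / delta z"
proof -
  let ?L = "\<lambda>a. (p \<bullet> a) * ln t"
  have "(\<Prod>a\<in>Rp. (1 - t powr (p \<bullet> a) * exp (a \<bullet> z)) / (1 - exp (a \<bullet> z)))
      = (\<Prod>a\<in>Rp. exp (?L a / 2) * (exp ((a \<bullet> z + ?L a) / 2) - exp (- ((a \<bullet> z + ?L a) / 2)))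
                    / (exp ((a \<bullet> z) / 2) - exp (- ((a \<bullet> z) / 2))))"
  proof (rule prod.cong[OF refl])
    fix a assume a: "a \<in> Rp"
    have "t powr (p \<bullet> a) = exp (?L a)" using t by (simp add: powr_def)
    then show "(1 - t powr (p \<bullet> a) * exp (a \<bullet> z)) / (1 - exp (a \<bullet> z)) =
      exp (?L a / 2) * (exp ((a \<bullet> z + ?L a) / 2) - exp (- ((a \<bullet> z + ?L a) / 2))) /
      (exp ((a \<bullet> z) / 2) - exp (- ((a \<bullet> z) / 2)))"
      using factor_id[of "a \<bullet> z" "?L a"] z a by simp
  qed
  also have "\<dots> = (\<Prod>a\<in>Rp. exp (?L a / 2)) * (\<Prod>a\<in>Rp. exp ((a \<bullet> z + ?L a) / 2) - exp (- ((a \<bullet> z + ?L a) / 2)))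
                    / (\<Prod>a\<in>Rp. exp ((a \<bullet> z) / 2) - exp (- ((a \<bullet> z) / 2)))"
    by (simp add: prod_dividef prod.distrib)
  also have "(\<Prod>a\<in>Rp. exp (?L a / 2)) = t powr (p \<bullet> rh)"
  proof -
    have "p \<bullet> rh = (\<Sum>a\<in>Rp. p \<bullet> a) / 2"
    proof -
      have "p \<bullet> rh = p \<bullet> ((1/2) *\<^sub>R (\<Sum>Rp))" by (subst (1) rho_def) (rule refl)
      also have "\<dots> = (\<Sum>a\<in>Rp. p \<bullet> a) / 2" by (simp only: inner_scaleR_right inner_sum_right)
      finally show ?thesis .
    qed
    then have "t powr (p \<bullet> rh) = exp ((\<Sum>a\<in>Rp. p \<bullet> a) / 2 * ln t)" using t by (simp add: powr_def)
    also have "\<dots> = exp (\<Sum>a\<in>Rp. ?L a / 2)"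
      by (simp add: sum_divide_distrib sum_distrib_right)
    also have "\<dots> = (\<Prod>a\<in>Rp. exp (?L a / 2))" by (simp add: exp_sum finRp)
    finally show ?thesis by simp
  qed
  also have "(\<Prod>a\<in>Rp. exp ((a \<bullet> z + ?L a) / 2) - exp (- ((a \<bullet> z + ?L a) / 2))) = delta (z + ln t *\<^sub>R p)"
    unfolding weyl_delta_def by (rule prod.cong[OF refl]) (simp add: inner_add_right inner_commute algebra_simps)
  also have "(\<Prod>a\<in>Rp. exp ((a \<bullet> z) / 2) - exp (- ((a \<bullet> z) / 2))) = delta z"
    unfolding weyl_delta_def by simp
  finally show ?thesis .
qed


lemma F_v:
  assumes t: "t > 0" and yreg: "\<forall>a\<in>R. a \<bullet> y \<noteq> 0" and v: "v \<in> W"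
  shows "(\<Prod>a\<in>Rp. (1 - t powr (p \<bullet> a) * exp (v a \<bullet> y)) / (1 - exp (v a \<bullet> y)))
         = t powr (p \<bullet> rh) * alt rh (y + ln t *\<^sub>R v p) / delta y"
proof -
  define z where "z = winv v y"
  have vz: "v a \<bullet> y = a \<bullet> z" for a
  proof -
    have "v a \<bullet> y = v a \<bullet> v z" unfolding z_def using winv_app(2)[OF v] by simp
    also have "\<dots> = a \<bullet> z" using W_inner[OF v] by simp
    finally show ?thesis .
  qed
  have zreg: "\<forall>a\<in>Rp. a \<bullet> z \<noteq> 0" using yreg W_R[OF v] Rp_R vz by (metis subsetD)
  have "(\<Prod>a\<in>Rp. (1 - t powr (p \<bullet> a) * exp (v a \<bullet> y)) / (1 - exp (v a \<bullet> y)))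
      = (\<Prod>a\<in>Rp. (1 - t powr (p \<bullet> a) * exp (a \<bullet> z)) / (1 - exp (a \<bullet> z)))"
    by (simp only: vz)
  also have "\<dots> = t powr (p \<bullet> rh) * delta (z + ln t *\<^sub>R p) / delta z"
    by (rule ratio_K[OF t zreg])
  also have "delta z = dt v * delta y"
    unfolding z_def using delta_W[OF winv(1)[OF v]] dt_winv[OF v] by simp
  also have "z + ln t *\<^sub>R p = winv v (y + ln t *\<^sub>R v p)"
    unfolding z_def using W_linear[OF winv(1)[OF v]] winv_app(1)[OF v]
    by (simp add: linear_add linear_scale)
  also have "delta (winv v (y + ln t *\<^sub>R v p)) = dt v * delta (y + ln t *\<^sub>R v p)"
    using delta_W[OF winv(1)[OF v]] dt_winv[OF v] by simp
  also have "delta (y + ln t *\<^sub>R v p) = alt rh (y + ln t *\<^sub>R v p)" by (simp add: weyl_den)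
  finally show ?thesis using dt_W[OF v] by auto
qed

lemma orbit_bij: assumes w: "w \<in> W" shows "bij_betw w (worbit R l) (worbit R l)"
proof -
  have "w ` worbit R l = worbit R l"
  proof
    show "w ` worbit R l \<subseteq> worbit R l"
      unfolding worbit_def using W_comp[OF w] by (auto simp: image_iff) (metis comp_apply)
    show "worbit R l \<subseteq> w ` worbit R l"
    proof
      fix x assume "x \<in> worbit R l"
      then obtain u where u: "u \<in> W" "x = u l" unfolding worbit_def by auto
      have "winv w \<circ> u \<in> W" using W_comp[OF winv(1)[OF w] u(1)] .
      moreover have "x = w ((winv w \<circ> u) l)" using u winv_app(2)[OF w] by simp
      ultimately have "(winv w \<circ> u) l \<in> worbit R l" "x = w ((winv w \<circ> u) l)"
        unfolding worbit_def by (blast intro: image_eqI[of _ "\<lambda>w. w l"])+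
      then show "x \<in> w ` worbit R l" by blast
    qed
  qed
  then show ?thesis using W_inj[OF w] by (auto simp: bij_betw_def inj_on_def inj_def)
qed

lemma fin_orbit: "finite (worbit R l)" unfolding worbit_def using finite_W by simp

lemma orbit_stab:
  "(\<Sum>u\<in>W. h (u p)) = real (card (wstab R p)) * (\<Sum>\<tau>\<in>worbit R p. h \<tau>)"
proof -
  have "(\<Sum>u\<in>W. h (u p)) = (\<Sum>\<tau>\<in>(\<lambda>u. u p) ` W. \<Sum>u\<in>{u. u \<in> W \<and> u p = \<tau>}. h (u p))"
    by (rule sum.image_gen[OF finite_W])
  also have "\<dots> = (\<Sum>\<tau>\<in>worbit R p. real (card (wstab R p)) * h \<tau>)"
    unfolding worbit_def
  proof (rule sum.cong[OF refl])
    fix \<tau> assume "\<tau> \<in> (\<lambda>u. u p) ` W"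
    then obtain u0 where u0: "u0 \<in> W" "\<tau> = u0 p" by auto
    have "bij_betw (\<lambda>x. u0 \<circ> x) (wstab R p) {u. u \<in> W \<and> u p = \<tau>}"
    proof (rule bij_betw_byWitness[where f'="\<lambda>u. winv u0 \<circ> u"])
      show "\<forall>a\<in>wstab R p. winv u0 \<circ> (u0 \<circ> a) = a"
        using winv(2)[OF u0(1)] by (simp add: comp_assoc[symmetric])
      show "\<forall>a'\<in>{u. u \<in> W \<and> u p = \<tau>}. u0 \<circ> (winv u0 \<circ> a') = a'"
        using winv(3)[OF u0(1)] by (simp add: comp_assoc[symmetric])
      show "(\<lambda>x. u0 \<circ> x) ` wstab R p \<subseteq> {u. u \<in> W \<and> u p = \<tau>}"
        unfolding wstab_def using W_comp[OF u0(1)] u0(2) by auto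
      show "(\<lambda>u. winv u0 \<circ> u) ` {u. u \<in> W \<and> u p = \<tau>} \<subseteq> wstab R p"
        unfolding wstab_def using W_comp[OF winv(1)[OF u0(1)]] u0(2) winv_app(1)[OF u0(1)] by auto
    qed
    then have "card {u. u \<in> W \<and> u p = \<tau>} = card (wstab R p)" by (simp add: bij_betw_same_card)
    moreover have "(\<Sum>u\<in>{u. u \<in> W \<and> u p = \<tau>}. h (u p)) = real (card {u. u \<in> W \<and> u p = \<tau>}) * h \<tau>"
      by simp
    ultimately show "(\<Sum>u\<in>{u. u \<in> W \<and> u p = \<tau>}. h (u p)) = real (card (wstab R p)) * h \<tau>" by simp
  qed
  finally show ?thesis by (simp add: sum_distrib_left)
qed

lemma card_stab_pos: "card (wstab R p) > 0"
proof -
  have "id \<in> wstab R p" unfolding wstab_def using W_id by simp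
  moreover have "finite (wstab R p)" unfolding wstab_def using finite_W by simp
  ultimately show ?thesis using card_gt_0_iff by blast
qed


lemma main_loc:
  assumes q: "q > 0" and t: "t > 0" and yreg: "\<forall>a\<in>R. a \<bullet> y \<noteq> 0"
  shows "macdonald_op R Rp p q t (sym_monomial R l) y =
     t powr (p \<bullet> rh) *
     (\<Sum>v\<in>worbit R l. (\<Sum>s\<in>worbit R p. t powr (s \<bullet> rh) * q powr (s \<bullet> v)) * weyl_char R Rp v y)"
proof -
  let ?c = "real (card (wstab R p))"
  let ?T = "t powr (p \<bullet> rh)"
  let ?O = "worbit R l"
  have cpos: "?c > 0" using card_stab_pos by simp
  have dnz: "delta y \<noteq> 0" using delta_nz yreg Rp_R by auto
  define G where "G v w \<mu> = dt w * exp (w rh \<bullet> y) * t powr (w rh \<bullet> v p) * (exp (\<mu> \<bullet> y) * q powr (\<mu> \<bullet> v p))"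
    for v w :: "real^'n \<Rightarrow> real^'n" and \<mu>
  define H where "H \<nu> u w = t powr (u p \<bullet> rh) * q powr (u p \<bullet> \<nu>) * (dt w * exp (w (\<nu> + rh) \<bullet> y))"
    for \<nu> and u w :: "real^'n \<Rightarrow> real^'n"
  have altq: "alt rh (y + ln t *\<^sub>R v p) = (\<Sum>w\<in>W. dt w * exp (w rh \<bullet> y) * t powr (w rh \<bullet> v p))" for v
    unfolding alt_def
  proof (rule sum.cong[OF refl])
    fix w
    have "exp (w rh \<bullet> (y + ln t *\<^sub>R v p)) = exp (w rh \<bullet> y) * t powr (w rh \<bullet> v p)"
      using t by (simp add: inner_add_right powr_def exp_add mult.commute)
    then show "dt w * exp (w rh \<bullet> (y + ln t *\<^sub>R v p)) = dt w * exp (w rh \<bullet> y) * t powr (w rh \<bullet> v p)"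
      by simp
  qed
  have symq: "sym_monomial R l (y + ln q *\<^sub>R v p) = (\<Sum>\<mu>\<in>?O. exp (\<mu> \<bullet> y) * q powr (\<mu> \<bullet> v p))" for v
    unfolding sym_monomial_def
    by (rule sum.cong[OF refl]) (use q in \<open>simp add: inner_add_right powr_def exp_add mult.commute\<close>)
  have "macdonald_op R Rp p q t (sym_monomial R l) y =
      (1 / ?c) * (\<Sum>v\<in>W. (?T * alt rh (y + ln t *\<^sub>R v p) / delta y) * sym_monomial R l (y + ln q *\<^sub>R v p))"
    unfolding macdonald_op_def using F_v[OF t yreg] by (simp cong: sum.cong)
  also have "\<dots> = ?T / (?c * delta y) * (\<Sum>v\<in>W. alt rh (y + ln t *\<^sub>R v p) * sym_monomial R l (y + ln q *\<^sub>R v p))"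
    unfolding sum_distrib_left by (rule sum.cong[OF refl]) (simp add: field_simps)
  also have "(\<Sum>v\<in>W. alt rh (y + ln t *\<^sub>R v p) * sym_monomial R l (y + ln q *\<^sub>R v p)) = (\<Sum>v\<in>W. \<Sum>w\<in>W. \<Sum>\<mu>\<in>?O. G v w \<mu>)"
    unfolding altq symq sum_product G_def ..
  also have "(\<Sum>v\<in>W. \<Sum>w\<in>W. \<Sum>\<mu>\<in>?O. G v w \<mu>) = (\<Sum>w\<in>W. \<Sum>v\<in>W. \<Sum>\<mu>\<in>?O. G v w \<mu>)"
    by (rule sum.swap)
  also have "\<dots> = (\<Sum>w\<in>W. \<Sum>u\<in>W. \<Sum>\<nu>\<in>?O. H \<nu> u w)"
  proof (rule sum.cong[OF refl])
    fix w assume w: "w \<in> W"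
    have "(\<Sum>v\<in>W. \<Sum>\<mu>\<in>?O. G v w \<mu>) = (\<Sum>u\<in>W. \<Sum>\<mu>\<in>?O. G (w \<circ> u) w \<mu>)"
      using sum.reindex_bij_betw[OF W_lmult_bij[OF w], of "\<lambda>v. \<Sum>\<mu>\<in>?O. G v w \<mu>"] by simp
    also have "\<dots> = (\<Sum>u\<in>W. \<Sum>\<nu>\<in>?O. G (w \<circ> u) w (w \<nu>))"
      by (rule sum.cong[OF refl]) (rule sum.reindex_bij_betw[OF orbit_bij[OF w], symmetric])
    also have "\<dots> = (\<Sum>u\<in>W. \<Sum>\<nu>\<in>?O. H \<nu> u w)"
    proof (intro sum.cong[OF refl])
      fix u \<nu>
      have "w (\<nu> + rh) = w \<nu> + w rh" using W_linear[OF w] by (simp add: linear_add)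
      then have e: "exp (w (\<nu> + rh) \<bullet> y) = exp (w \<nu> \<bullet> y) * exp (w rh \<bullet> y)"
        by (simp only: inner_add_left exp_add)
      have i1: "w rh \<bullet> (w \<circ> u) p = u p \<bullet> rh" using W_inner[OF w] by (simp add: inner_commute)
      have i2: "w \<nu> \<bullet> (w \<circ> u) p = u p \<bullet> \<nu>" using W_inner[OF w] by (simp add: inner_commute)
      show "G (w \<circ> u) w (w \<nu>) = H \<nu> u w"
        unfolding G_def H_def i1 i2 e by (simp only: mult_ac)
    qed
    finally show "(\<Sum>v\<in>W. \<Sum>\<mu>\<in>?O. G v w \<mu>) = (\<Sum>u\<in>W. \<Sum>\<nu>\<in>?O. H \<nu> u w)" .
  qed
  also have "\<dots> = (\<Sum>\<nu>\<in>?O. \<Sum>u\<in>W. \<Sum>w\<in>W. H \<nu> u w)"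
  proof -
    have "(\<Sum>w\<in>W. \<Sum>u\<in>W. \<Sum>\<nu>\<in>?O. H \<nu> u w) = (\<Sum>w\<in>W. \<Sum>\<nu>\<in>?O. \<Sum>u\<in>W. H \<nu> u w)"
      by (rule sum.cong[OF refl]) (rule sum.swap)
    also have "\<dots> = (\<Sum>\<nu>\<in>?O. \<Sum>w\<in>W. \<Sum>u\<in>W. H \<nu> u w)" by (rule sum.swap)
    also have "\<dots> = (\<Sum>\<nu>\<in>?O. \<Sum>u\<in>W. \<Sum>w\<in>W. H \<nu> u w)"
      by (rule sum.cong[OF refl]) (rule sum.swap)
    finally show ?thesis .
  qed
  finally have L: "macdonald_op R Rp p q t (sym_monomial R l) y = ?T / (?c * delta y) * (\<Sum>\<nu>\<in>?O. \<Sum>u\<in>W. \<Sum>w\<in>W. H \<nu> u w)" .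
  have wc: "weyl_char R Rp v y = alt (v + rh) y / delta y" for v
    unfolding weyl_char_def alt_def dt_def ..
  have orb: "(\<Sum>s\<in>worbit R p. t powr (s \<bullet> rh) * q powr (s \<bullet> v)) = (1 / ?c) * (\<Sum>u\<in>W. t powr (u p \<bullet> rh) * q powr (u p \<bullet> v))" for v
    using orbit_stab[of "\<lambda>s. t powr (s \<bullet> rh) * q powr (s \<bullet> v)"] cpos by simp
  have HS: "(\<Sum>u\<in>W. \<Sum>w\<in>W. H \<nu> u w) = (\<Sum>u\<in>W. t powr (u p \<bullet> rh) * q powr (u p \<bullet> \<nu>)) * alt (\<nu> + rh) y" for \<nu>
    unfolding H_def alt_def sum_product ..
  have "?T * (\<Sum>v\<in>?O. (\<Sum>s\<in>worbit R p. t powr (s \<bullet> rh) * q powr (s \<bullet> v)) * weyl_char R Rp v y)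
      = ?T / (?c * delta y) * (\<Sum>\<nu>\<in>?O. \<Sum>u\<in>W. \<Sum>w\<in>W. H \<nu> u w)"
    unfolding orb wc HS sum_distrib_left[of ?T] sum_distrib_left[of "?T / (?c * delta y)"]
    by (rule sum.cong[OF refl]) (simp add: field_simps)
  then show ?thesis using L by simp
qed

end

theorem mainTheorem8:
  fixes R Rp :: "(real^'n) set" and p l y :: "real^'n" and q t :: real
  assumes "root_system R" and "reduced_rs R" and "irreducible_rs R"
    and "positive_system R Rp"
    and "dual_minuscule Rp p"
    and "q > 0" and "t > 0"
    and "l \<in> dominant_weights R Rp"
    and "\<forall>a\<in>R. a \<bullet> y \<noteq> 0"
  shows "macdonald_op R Rp p q t (sym_monomial R l) y =
     t powr (p \<bullet> rho Rp) *
     (\<Sum>v\<in>worbit R l. (\<Sum>s\<in>worbit R p. t powr (s \<bullet> rho Rp) * q powr (s \<bullet> v)) * weyl_char R Rp v y)"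
proof -
  obtain g where g: "\<forall>a\<in>R. a \<bullet> g \<noteq> 0" "Rp = {a\<in>R. a \<bullet> g > 0}"
    using assms(4) unfolding positive_system_def by blast
  interpret rsys R Rp g using assms(1,2) g by unfold_locales auto
  show ?thesis by (rule main_loc[OF assms(6,7,9)])
qed

end
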